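(* Let $\alpha$ be a normalized, right-continuous dynamic coherent acceptability index and $(\rho^x)_{x\in(0,\infty)}$ the corresponding family of dynamic coherent risk measures. Assume that for each $x>0$ the DCRM $\rho^x$ is strongly time consistent, and that all one-step risk measures $\rho^x_{t,t+1}$ are identical across nodes in the sense of condition (I) of the context. Then, in the market model of the context (short-selling constraints), the maximal acceptability is independent of wealth, time and state: $\alpha^*_t(V_t;\omega)=\alpha^*_0(1)$ for all $t\in\{0,\dots,T-1\}$, all $\omega\in\Omega$ and all strictly positive $V_t\in L_t$.
   Context: Setting: $\mathcal T=\{0,\dots,T\}$, finite filtered probability space $(\Omega,\mathcal F,(\mathcal F_t)_{t\in\mathcal T},\mathbb P)$ with $\mathbb P$ of full support and $\mathcal F_0$ trivial; $\mathcal P_t$ is the partition of $\Omega$ generating $\mathcal F_t$; $L_t$ denotes $\mathcal F_t$-measurable random variables; $\mathbb D$ is the set of adapted real processes $D=(D_t)_{t=0}^T$ (cash flows); $\mathbb 1_{\{s\}}$ denotes the process equal to $1$ at time $s$ and $0$ otherwise, and $\mathbb 1_A$ the indicator of an event. A dynamic coherent acceptability index (DCAI) is $\alpha:\mathcal T\times\mathbb D\times\Omega\to[0,\infty]$ such that for all $t$, $D,D'\in\mathbb D$, $A\in\mathcal F_t$: (A1) $\alpha_t(D)$ is $\mathcal F_t$-measurable; (A2) if $\mathbb 1_AD_s=\mathbb 1_AD'_s$ for all $s\ge t$ then $\mathbb 1_A\alpha_t(D)=\mathbb 1_A\alpha_t(D')$; (A3) if $D_s\ge D'_s$ for all $s\ge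 t$ then $\alpha_t(D)\ge\alpha_t(D')$; (A4) $\alpha_t(\lambda D)=\alpha_t(D)$ for $\lambda\in L_t$, $\lambda>0$; (A5) $\alpha_t(\lambda D+(1-\lambda)D')\ge\min\{\alpha_t(D),\alpha_t(D')\}$ for $0\le\lambda\le1$, $\lambda\in L_t$; (A6) $\alpha_t(D+m\mathbb 1_{\{t\}})=\alpha_t(D+m\mathbb 1_{\{s\}})$ for $m\in L_t$, $s\ge t$; (A7) if $D_t\ge0\ge D'_t$ and there is $m\in L_t$ with $\alpha_{t+1}(D)\ge m\ge\alpha_{t+1}(D')$ then $\alpha_t(D)\ge m\ge\alpha_t(D')$. It is normalized if for all $t,\omega$ there are $D,D'$ with $\alpha_t(D,\omega)=\infty$, $\alpha_t(D',\omega)=0$; right-continuous if $\lim_{c\to0^+}\alpha_t(D+c\mathbb 1_{\{t\}},\omega)=\alpha_t(D,\omega)$. A dynamic coherent risk measure (DCRM) is $\rho:\mathcal T\times\mathbb D\times\Omega\to\mathbb R$ with (R1) adaptedness; (R2) independence of the past (as A2); (R3) $D_s\ge D'_s\ \forall s\ge t\Rightarrow\rho_t(D)\le\rho_t(D')$; (R4) $\rho_t(\lambda D)=\lambda\rho_t(D)$, $\lambda\in L_t$, $\lambda>0$; (R5) subadditivity; (R6) $\rho_t(D+m\mathbb 1_{\{s\}})=\rho_t(D)-m$ for $m\in L_t$, $s\ge t$; (R7) $\mathbb 1_A(\min_{\omega\in A}\rho_{t+1}(D,\omega)-D_t)\le\mathbb 1_A\rho_t(D)\le\mathbb 1_A(\max_{\omega\in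 A}\rho_{t+1}(D,\omega)-D_t)$ for $A\in\mathcal F_t$. The family corresponding to $\alpha$ is $\rho^x_t(D,\omega):=\inf\{c\in\mathbb R:\alpha_t(D+c\mathbb 1_{\{t\}},\omega)\ge x\}$, $x>0$; it is an increasing left-continuous family of DCRMs with $\alpha_t(D,\omega)=\sup\{x>0:\rho^x_t(D,\omega)\le0\}$. A DCRM is strongly time consistent if for $D,D'$ and $t<T$: $D_t=D'_t$ and $\rho_{t+1}(D)=\rho_{t+1}(D')$ imply $\rho_t(D)=\rho_t(D')$ (equivalently $\rho_t(D)=\rho_t(-\rho_{t+1}(D)\mathbb 1_{\{t+1\}})-D_t$). One-step risk measures: $\rho^x_{t,t+1}(Z,\omega):=\rho^x_t(Z\mathbb 1_{\{t+1\}})(\omega)$ for $\mathcal F_{t+1}$-measurable $Z$. Condition (I): for all $t,s$, $\Omega_t\in\mathcal P_t$, $\Omega_s\in\mathcal P_s$, $\rho^x_{t,t+1}(D_{t+1},\omega)=\rho^x_{s,s+1}(D'_{s+1},\omega')$ for all $\omega\in\Omega_t$, $\omega'\in\Omega_s$ and all $D,D'$ such that $\mathbb 1_{\Omega_t}D_{t+1}$ and $\mathbb 1_{\Omega_s}D'_{s+1}$ have the same distribution and are zero outside $\Omega_t$ resp. $\Omega_s$. Market: $d$ assets with strictly positive gross returns $R_{s+1}\in\mathbb R^d$, $s=0,\dots,T-1$, i.i.d., generating the filtration. For $\mathcal F_t$-measurable wealth $V_t>0$, $\mathcal H_t^+(V_t)$ is the set of adapted $(h_s)_{s=t}^{T-1}$,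 $h_s\in\mathbb R^d_+$, with $\mathbf 1^\top h_s=V_s$, $V_{s+1}=R_{s+1}^\top h_s$. The dividend stream of $h$ is $D_s(h)=V_s-V_{s-1}$, and $D^{[t+1,T]}(h):=(0,\dots,0,D_{t+1}(h),\dots,D_T(h))$. Maximal acceptability: $\alpha^*_t(V_t;\omega):=\sup_{h\in\mathcal H^+_t(V_t)}\alpha_t(D^{[t+1,T]}(h);\omega)$. *)

theory Defs
  imports Complex_Main "HOL-Library.Extended_Real"
begin

(* Filtration on a finite sample space 'w, described by the atoms of the
   partitions P_t: cell t w is the atom of P_t containing w. *)

type_synonym 'w proc = "nat \<Rightarrow> 'w \<Rightarrow> real"

definition meas :: "(nat \<Rightarrow> 'w \<Rightarrow> 'w set) \<Rightarrow> nat \<Rightarrow> ('w \<Rightarrow> 'b) \<Rightarrow> bool" where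
  "meas cell t X \<longleftrightarrow> (\<forall>w w'. w' \<in> cell t w \<longrightarrow> X w' = X w)"

definition evt :: "(nat \<Rightarrow> 'w \<Rightarrow> 'w set) \<Rightarrow> nat \<Rightarrow> 'w set \<Rightarrow> bool" where
  "evt cell t A \<longleftrightarrow> (\<forall>w\<in>A. cell t w \<subseteq> A)"

definition procs :: "(nat \<Rightarrow> 'w \<Rightarrow> 'w set) \<Rightarrow> nat \<Rightarrow> 'w proc set" where
  "procs cell T = {D. (\<forall>t\<le>T. meas cell t (D t)) \<and> (\<forall>t>T. D t = (\<lambda>_. 0))}"

definition ind_at :: "nat \<Rightarrow> ('w \<Rightarrow> real) \<Rightarrow> 'w proc" where
  "ind_at s m = (\<lambda>r w. if r = s then m w else 0)"

definition padd :: "'w proc \<Rightarrow> 'w proc \<Rightarrow> 'w proc" where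
  "padd D E = (\<lambda>r w. D r w + E r w)"

text \<open>lambda D and lambda D + (1-lambda) D' for F_t-measurable lambda, acting on times s >= t
  (times before t are left untouched so that the result is again adapted; by (A2) they are irrelevant).\<close>
definition scale_from :: "nat \<Rightarrow> ('w \<Rightarrow> real) \<Rightarrow> 'w proc \<Rightarrow> 'w proc" where
  "scale_from t l D = (\<lambda>s w. if s < t then D s w else l w * D s w)"

definition mix_from :: "nat \<Rightarrow> ('w \<Rightarrow> real) \<Rightarrow> 'w proc \<Rightarrow> 'w proc \<Rightarrow> 'w proc" where
  "mix_from t l D D' = (\<lambda>s w. if s < t then D s w else l w * D s w + (1 - l w) * D' s w)"

definition dcai :: "(nat \<Rightarrow> 'w \<Rightarrow> 'w set) \<Rightarrow> nat \<Rightarrow> (nat \<Rightarrow> 'w proc \<Rightarrow> 'w \<Rightarrow> ereal) \<Rightarrow> bool" where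
  "dcai cell T \<alpha> \<longleftrightarrow>
    (\<forall>t\<le>T. \<forall>D\<in>procs cell T. \<forall>w. 0 \<le> \<alpha> t D w) \<and>
    \<comment> \<open>A1\<close>
    (\<forall>t\<le>T. \<forall>D\<in>procs cell T. meas cell t (\<alpha> t D)) \<and>
    \<comment> \<open>A2\<close>
    (\<forall>t\<le>T. \<forall>D\<in>procs cell T. \<forall>D'\<in>procs cell T. \<forall>A. evt cell t A \<longrightarrow>
        (\<forall>s. t \<le> s \<longrightarrow> s \<le> T \<longrightarrow> (\<forall>w\<in>A. D s w = D' s w)) \<longrightarrow>
        (\<forall>w\<in>A. \<alpha> t D w = \<alpha> t D' w)) \<and>
    \<comment> \<open>A3\<close>
    (\<forall>t\<le>T. \<forall>D\<in>procs cell T. \<forall>D'\<in>procs cell T.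
        (\<forall>s. t \<le> s \<longrightarrow> s \<le> T \<longrightarrow> (\<forall>w. D' s w \<le> D s w)) \<longrightarrow>
        (\<forall>w. \<alpha> t D' w \<le> \<alpha> t D w)) \<and>
    \<comment> \<open>A4\<close>
    (\<forall>t\<le>T. \<forall>D\<in>procs cell T. \<forall>l. meas cell t l \<longrightarrow> (\<forall>w. 0 < l w) \<longrightarrow>
        \<alpha> t (scale_from t l D) = \<alpha> t D) \<and>
    \<comment> \<open>A5\<close>
    (\<forall>t\<le>T. \<forall>D\<in>procs cell T. \<forall>D'\<in>procs cell T. \<forall>l. meas cell t l \<longrightarrow>
        (\<forall>w. 0 \<le> l w \<and> l w \<le> 1) \<longrightarrow>
        (\<forall>w. min (\<alpha> t D w) (\<alpha> t D' w) \<le> \<alpha> t (mix_from t l D D') w)) \<and>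
    \<comment> \<open>A6\<close>
    (\<forall>t\<le>T. \<forall>D\<in>procs cell T. \<forall>m. meas cell t m \<longrightarrow>
        (\<forall>s. t \<le> s \<longrightarrow> s \<le> T \<longrightarrow> \<alpha> t (padd D (ind_at t m)) = \<alpha> t (padd D (ind_at s m)))) \<and>
    \<comment> \<open>A7\<close>
    (\<forall>t<T. \<forall>D\<in>procs cell T. \<forall>D'\<in>procs cell T. \<forall>m. meas cell t m \<longrightarrow>
        (\<forall>w. D' t w \<le> 0 \<and> 0 \<le> D t w) \<longrightarrow>
        (\<forall>w. ereal (m w) \<le> \<alpha> (t+1) D w \<and> \<alpha> (t+1) D' w \<le> ereal (m w)) \<longrightarrow>
        (\<forall>w. ereal (m w) \<le> \<alpha> t D w \<and> \<alpha> t D' w \<le> ereal (m w)))"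

definition normalized :: "(nat \<Rightarrow> 'w \<Rightarrow> 'w set) \<Rightarrow> nat \<Rightarrow> (nat \<Rightarrow> 'w proc \<Rightarrow> 'w \<Rightarrow> ereal) \<Rightarrow> bool" where
  "normalized cell T \<alpha> \<longleftrightarrow> (\<forall>t\<le>T. \<forall>w.
     (\<exists>D\<in>procs cell T. \<alpha> t D w = \<infinity>) \<and> (\<exists>D'\<in>procs cell T. \<alpha> t D' w = 0))"

definition right_cont :: "(nat \<Rightarrow> 'w \<Rightarrow> 'w set) \<Rightarrow> nat \<Rightarrow> (nat \<Rightarrow> 'w proc \<Rightarrow> 'w \<Rightarrow> ereal) \<Rightarrow> bool" where
  "right_cont cell T \<alpha> \<longleftrightarrow> (\<forall>t\<le>T. \<forall>D\<in>procs cell T. \<forall>w.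
     ((\<lambda>c::real. \<alpha> t (padd D (ind_at t (\<lambda>_. c))) w) \<longlongrightarrow> \<alpha> t D w) (at_right 0))"

definition rho :: "(nat \<Rightarrow> 'w proc \<Rightarrow> 'w \<Rightarrow> ereal) \<Rightarrow> real \<Rightarrow> nat \<Rightarrow> 'w proc \<Rightarrow> 'w \<Rightarrow> ereal" where
  "rho \<alpha> x t D w = Inf {ereal c | c. ereal x \<le> \<alpha> t (padd D (ind_at t (\<lambda>_. c))) w}"

definition strongly_tc :: "(nat \<Rightarrow> 'w \<Rightarrow> 'w set) \<Rightarrow> nat \<Rightarrow> (nat \<Rightarrow> 'w proc \<Rightarrow> 'w \<Rightarrow> ereal) \<Rightarrow> bool" where
  "strongly_tc cell T \<rho> \<longleftrightarrow> (\<forall>t<T. \<forall>D\<in>procs cell T. \<forall>D'\<in>procs cell T.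
     (\<forall>w. D t w = D' t w) \<longrightarrow> \<rho> (t+1) D = \<rho> (t+1) D' \<longrightarrow> \<rho> t D = \<rho> t D')"

definition prob :: "('w::finite \<Rightarrow> real) \<Rightarrow> 'w set \<Rightarrow> real" where
  "prob P A = (\<Sum>w\<in>A. P w)"

text \<open>Condition (I): one-step risk measures rho_{t,t+1}(Z) = rho_t(Z 1_{t+1}) agree on atoms
  on which the (conditional) laws of the positions coincide.\<close>
definition cond_I :: "('w::finite \<Rightarrow> real) \<Rightarrow> (nat \<Rightarrow> 'w \<Rightarrow> 'w set) \<Rightarrow> nat \<Rightarrow>
    (nat \<Rightarrow> 'w proc \<Rightarrow> 'w \<Rightarrow> ereal) \<Rightarrow> bool" where
  "cond_I P cell T \<rho> \<longleftrightarrow> (\<forall>t<T. \<forall>s<T. \<forall>w0 w1. \<forall>Z Z'.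
     meas cell (t+1) Z \<longrightarrow> meas cell (s+1) Z' \<longrightarrow>
     (\<forall>v. prob P (cell t w0 \<inter> {w. Z w = v}) / prob P (cell t w0)
        = prob P (cell s w1 \<inter> {w. Z' w = v}) / prob P (cell s w1)) \<longrightarrow>
     (\<forall>w\<in>cell t w0. \<forall>w'\<in>cell s w1. \<rho> t (ind_at (t+1) Z) w = \<rho> s (ind_at (s+1) Z') w'))"

text \<open>Market: gross returns R s (s = 1..T) generate the filtration.\<close>
definition ret_cell :: "(nat \<Rightarrow> 'w \<Rightarrow> 'd \<Rightarrow> real) \<Rightarrow> nat \<Rightarrow> 'w \<Rightarrow> 'w set" where
  "ret_cell R t w = {w'. \<forall>s\<in>{1..t}. R s w' = R s w}"

definition iid :: "('w::finite \<Rightarrow> real) \<Rightarrow> (nat \<Rightarrow> 'w \<Rightarrow> 'd \<Rightarrow> real) \<Rightarrow> nat \<Rightarrow> bool" where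
  "iid P R T \<longleftrightarrow>
    (\<forall>s\<in>{1..T}. \<forall>s'\<in>{1..T}. \<forall>v. prob P {w. R s w = v} = prob P {w. R s' w = v}) \<and>
    (\<forall>v. prob P {w. \<forall>s\<in>{1..T}. R s w = v s} = (\<Prod>s\<in>{1..T}. prob P {w. R s w = v s}))"

definition wealth :: "(nat \<Rightarrow> 'w \<Rightarrow> 'd::finite \<Rightarrow> real) \<Rightarrow> nat \<Rightarrow> ('w \<Rightarrow> real) \<Rightarrow>
    (nat \<Rightarrow> 'w \<Rightarrow> 'd \<Rightarrow> real) \<Rightarrow> nat \<Rightarrow> 'w \<Rightarrow> real" where
  "wealth R t V h s w = (if s \<le> t then V w else (\<Sum>i\<in>UNIV. R s w i * h (s-1) w i))"

definition portfolios :: "(nat \<Rightarrow> 'w \<Rightarrow> 'w set) \<Rightarrow> (nat \<Rightarrow> 'w \<Rightarrow> 'd::finite \<Rightarrow> real) \<Rightarrow> nat \<Rightarrow>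
    nat \<Rightarrow> ('w \<Rightarrow> real) \<Rightarrow> (nat \<Rightarrow> 'w \<Rightarrow> 'd \<Rightarrow> real) set" where
  "portfolios cell R T t V = {h. \<forall>s. t \<le> s \<and> s < T \<longrightarrow>
      (\<forall>i. meas cell s (\<lambda>w. h s w i)) \<and> (\<forall>w i. 0 \<le> h s w i) \<and>
      (\<forall>w. (\<Sum>i\<in>UNIV. h s w i) = wealth R t V h s w)}"

definition divs :: "(nat \<Rightarrow> 'w \<Rightarrow> 'd::finite \<Rightarrow> real) \<Rightarrow> nat \<Rightarrow> nat \<Rightarrow> ('w \<Rightarrow> real) \<Rightarrow>
    (nat \<Rightarrow> 'w \<Rightarrow> 'd \<Rightarrow> real) \<Rightarrow> 'w proc" where
  "divs R T t V h = (\<lambda>s w. if t < s \<and> s \<le> T then wealth R t V h s w - wealth R t V h (s-1) w else 0)"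

definition max_acc :: "(nat \<Rightarrow> 'w \<Rightarrow> 'd::finite \<Rightarrow> real) \<Rightarrow> nat \<Rightarrow> (nat \<Rightarrow> 'w proc \<Rightarrow> 'w \<Rightarrow> ereal) \<Rightarrow>
    nat \<Rightarrow> ('w \<Rightarrow> real) \<Rightarrow> 'w \<Rightarrow> ereal" where
  "max_acc R T \<alpha> t V w = (SUP h\<in>portfolios (ret_cell R) R T t V. \<alpha> t (divs R T t V h) w)"

end

theory Submission imports Defs "HOL-Library.FuncSet" begin

lemma in_cell_iff: "v \<in> ret_cell R t w \<longleftrightarrow> (\<forall>s\<in>{1..t}. R s v = R s w)"
  by (simp add: ret_cell_def)

lemma cell_self[simp]: "w \<in> ret_cell R t w"
  by (simp add: ret_cell_def)

lemma cell_sym: "v \<in> ret_cell R t w \<Longrightarrow> w \<in> ret_cell R t v"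
  by (simp add: ret_cell_def)

lemma cell_eq: "v \<in> ret_cell R t w \<Longrightarrow> ret_cell R t v = ret_cell R t w"
  unfolding ret_cell_def by (simp add: set_eq_iff)

lemma cell_mono: "s \<le> t \<Longrightarrow> v \<in> ret_cell R t w \<Longrightarrow> v \<in> ret_cell R s w"
  unfolding ret_cell_def by simp

lemma cell_0[simp]: "ret_cell R 0 w = UNIV"
  by (auto simp add: ret_cell_def)

lemma evt_cell: "evt (ret_cell R) t (ret_cell R t w)"
  unfolding evt_def by (simp add: cell_eq)

lemma meas_mono: "meas (ret_cell R) s X \<Longrightarrow> s \<le> t \<Longrightarrow> meas (ret_cell R) t X"
  unfolding meas_def by (metis cell_mono)

lemma measD: "meas (ret_cell R) t X \<Longrightarrow> v \<in> ret_cell R t w \<Longrightarrow> X v = X w"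
  unfolding meas_def by blast

lemma meas_const[simp]: "meas cell t (\<lambda>_. c)"
  by (simp add: meas_def)

lemma meas_R: "1 \<le> r \<Longrightarrow> r \<le> t \<Longrightarrow> meas (ret_cell R) t (\<lambda>w. R r w)"
  unfolding meas_def ret_cell_def by simp

lemma meas_indicator_cell: "meas (ret_cell R) t (\<lambda>v. v \<in> ret_cell R t w)"
  unfolding meas_def using cell_eq[of _ R t] cell_sym[of _ R t] by blast

lemma procsD: "D \<in> procs cell T \<Longrightarrow> t \<le> T \<Longrightarrow> meas cell t (D t)"
  by (simp add: procs_def)

lemma procsD2: "D \<in> procs cell T \<Longrightarrow> T < t \<Longrightarrow> D t v = 0"
  by (simp add: procs_def)

lemma procsI: "(\<And>t. t \<le> T \<Longrightarrow> meas cell t (D t)) \<Longrightarrow> (\<And>t v. T < t \<Longrightarrow> D t v = 0) \<Longrightarrow> D \<in> procs cell T"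
  by (auto simp add: procs_def)

lemma ind_at_procs: "s \<le> T \<Longrightarrow> meas cell s m \<Longrightarrow> ind_at s m \<in> procs cell T"
  by (auto simp add: procs_def ind_at_def meas_def)

lemma zero_procs: "(\<lambda>_ _. 0) \<in> procs cell T"
  by (auto simp add: procs_def meas_def)

lemma padd_procs: "D \<in> procs cell T \<Longrightarrow> E \<in> procs cell T \<Longrightarrow> padd D E \<in> procs cell T"
  by (auto simp add: procs_def padd_def meas_def)

lemma scale_procs: "D \<in> procs (ret_cell R) T \<Longrightarrow> meas (ret_cell R) t l \<Longrightarrow> scale_from t l D \<in> procs (ret_cell R) T"
  apply (rule procsI)
  subgoal for s
    using procsD[of D "ret_cell R" T s] meas_mono[of R t l s]
    by (auto simp add: scale_from_def meas_def)
  subgoal for s v using procsD2[of D "ret_cell R" T s] by (auto simp add: scale_from_def)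
  done

lemma padd_ind_const: "padd (padd D (ind_at t (\<lambda>_. a))) (ind_at t (\<lambda>_. b)) = padd D (ind_at t (\<lambda>_. a + b))"
  by (auto simp add: padd_def ind_at_def fun_eq_iff)

lemma padd_ind0[simp]: "padd D (ind_at t (\<lambda>_. 0)) = D"
  by (auto simp add: padd_def ind_at_def fun_eq_iff)

lemma padd_comm: "padd D E = padd E D"
  by (auto simp add: padd_def fun_eq_iff)

lemma padd_assoc: "padd (padd D E) F = padd D (padd E F)"
  by (auto simp add: padd_def fun_eq_iff)

lemma abs_le_sumabs: "\<bar>f (v::'a::finite)\<bar> \<le> (\<Sum>u\<in>UNIV. \<bar>f u\<bar>::real)"
  by (rule member_le_sum) auto

locale mkt =
  fixes R :: "nat \<Rightarrow> 'w::finite \<Rightarrow> 'd::finite \<Rightarrow> real" and T :: nat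
    and \<alpha> :: "nat \<Rightarrow> 'w proc \<Rightarrow> 'w \<Rightarrow> ereal"
  assumes Rpos: "\<forall>s\<in>{1..T}. \<forall>w i. 0 < R s w i"
    and dc: "dcai (ret_cell R) T \<alpha>"
    and nz: "normalized (ret_cell R) T \<alpha>"
    and rc: "right_cont (ret_cell R) T \<alpha>"
begin

abbreviation "cell \<equiv> ret_cell R"
abbreviation "PR \<equiv> procs (ret_cell R) T"

lemmas dca = dc[unfolded dcai_def]
lemmas dcs1 = dca[THEN conjunct1]
lemmas dcs2 = dca[THEN conjunct2, THEN conjunct1]
lemmas dcs3 = dca[THEN conjunct2, THEN conjunct2, THEN conjunct1]
lemmas dcs4 = dca[THEN conjunct2, THEN conjunct2, THEN conjunct2, THEN conjunct1]
lemmas dcs5 = dca[THEN conjunct2, THEN conjunct2, THEN conjunct2, THEN conjunct2, THEN conjunct1]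
lemmas dcs6 = dca[THEN conjunct2, THEN conjunct2, THEN conjunct2, THEN conjunct2, THEN conjunct2, THEN conjunct1]
lemmas dcs7 = dca[THEN conjunct2, THEN conjunct2, THEN conjunct2, THEN conjunct2, THEN conjunct2, THEN conjunct2, THEN conjunct1]
lemmas dcs8 = dca[THEN conjunct2, THEN conjunct2, THEN conjunct2, THEN conjunct2, THEN conjunct2, THEN conjunct2, THEN conjunct2]

lemma A0: "t \<le> T \<Longrightarrow> D \<in> PR \<Longrightarrow> 0 \<le> \<alpha> t D w"
  using dcs1 by blast

lemma A1: "t \<le> T \<Longrightarrow> D \<in> PR \<Longrightarrow> v \<in> cell t w \<Longrightarrow> \<alpha> t D v = \<alpha> t D w"
  using dcs2 unfolding meas_def by blast

lemma A2: "t \<le> T \<Longrightarrow> D \<in> PR \<Longrightarrow> D' \<in> PR \<Longrightarrow>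
   (\<And>s v. t \<le> s \<Longrightarrow> s \<le> T \<Longrightarrow> v \<in> cell t w \<Longrightarrow> D s v = D' s v) \<Longrightarrow> \<alpha> t D w = \<alpha> t D' w"
proof -
  assume a: "t \<le> T" "D \<in> PR" "D' \<in> PR" "(\<And>s v. t \<le> s \<Longrightarrow> s \<le> T \<Longrightarrow> v \<in> cell t w \<Longrightarrow> D s v = D' s v)"
  have "\<forall>w\<in>cell t w. \<alpha> t D w = \<alpha> t D' w"
    using dcs3[rule_format, OF a(1,2,3) evt_cell[of R t w]] a(4) by blast
  then show ?thesis by simp
qed

lemma A3: "t \<le> T \<Longrightarrow> D \<in> PR \<Longrightarrow> D' \<in> PR \<Longrightarrow>
   (\<And>s v. t \<le> s \<Longrightarrow> s \<le> T \<Longrightarrow> D' s v \<le> D s v) \<Longrightarrow> \<alpha> t D' w \<le> \<alpha> t D w"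
  using dcs4 by blast

lemma A4: "t \<le> T \<Longrightarrow> D \<in> PR \<Longrightarrow> meas cell t l \<Longrightarrow> (\<And>v. 0 < l v) \<Longrightarrow> \<alpha> t (scale_from t l D) = \<alpha> t D"
  using dcs5 by blast

lemma A6: "t \<le> T \<Longrightarrow> D \<in> PR \<Longrightarrow> meas cell t m \<Longrightarrow> t \<le> s \<Longrightarrow> s \<le> T \<Longrightarrow>
   \<alpha> t (padd D (ind_at t m)) = \<alpha> t (padd D (ind_at s m))"
  using dcs7 by blast

lemma A7: "t < T \<Longrightarrow> D \<in> PR \<Longrightarrow> D' \<in> PR \<Longrightarrow> meas cell t m \<Longrightarrow>
   (\<And>v. D' t v \<le> 0) \<Longrightarrow> (\<And>v. 0 \<le> D t v) \<Longrightarrow>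
   (\<And>v. ereal (m v) \<le> \<alpha> (t+1) D v) \<Longrightarrow> (\<And>v. \<alpha> (t+1) D' v \<le> ereal (m v)) \<Longrightarrow>
   ereal (m w) \<le> \<alpha> t D w \<and> \<alpha> t D' w \<le> ereal (m w)"
proof -
  assume a: "t < T" "D \<in> PR" "D' \<in> PR" "meas cell t m"
   "(\<And>v. D' t v \<le> 0)" "(\<And>v. 0 \<le> D t v)"
   "(\<And>v. ereal (m v) \<le> \<alpha> (t+1) D v)" "(\<And>v. \<alpha> (t+1) D' v \<le> ereal (m v))"
  have "\<forall>w. D' t w \<le> 0 \<and> 0 \<le> D t w" using a by blast
  moreover have "\<forall>w. ereal (m w) \<le> \<alpha> (t+1) D w \<and> \<alpha> (t+1) D' w \<le> ereal (m w)" using a by blast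
  ultimately show ?thesis using dcs8[rule_format, OF a(1,2,3,4)] by blast
qed


lemma nzT: "t \<le> T \<Longrightarrow> (\<exists>D\<in>PR. \<alpha> t D w = \<infinity>) \<and> (\<exists>D'\<in>PR. \<alpha> t D' w = 0)"
  using nz unfolding normalized_def by blast

lemma rcT: "t \<le> T \<Longrightarrow> D \<in> PR \<Longrightarrow>
  ((\<lambda>c::real. \<alpha> t (padd D (ind_at t (\<lambda>_. c))) w) \<longlongrightarrow> \<alpha> t D w) (at_right 0)"
  using rc unfolding right_cont_def by blast

lemma pc_procs: "t \<le> T \<Longrightarrow> D \<in> PR \<Longrightarrow> padd D (ind_at t (\<lambda>_. c)) \<in> PR"
  by (intro padd_procs ind_at_procs) auto

lemma topT:
  assumes E: "E \<in> PR" and d: "0 < \<delta>" "\<And>v. \<delta> \<le> E T v"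
  shows "\<alpha> T E w = \<infinity>"
proof -
  obtain D where D: "D \<in> PR" "\<alpha> T D w = \<infinity>" using nzT[of T w] by blast
  define M where "M = (\<Sum>v\<in>UNIV. \<bar>D T v\<bar>)"
  have M: "\<bar>D T v\<bar> \<le> M" for v unfolding M_def by (rule abs_le_sumabs)
  have M0: "0 \<le> M" unfolding M_def by (simp add: sum_nonneg)
  define l where "l = \<delta> / (M+1)"
  have l0: "0 < l" using d M0 by (simp add: l_def)
  have le: "l * D T v \<le> E T v" for v
  proof -
    have "D T v \<le> M" using M[of v] by linarith
    then have "l * D T v \<le> l * M" using l0 by (simp add: mult_left_mono)
    also have "l * M \<le> \<delta>" unfolding l_def using d M0 by (simp add: field_simps)
    also have "\<dots> \<le> E T v" by (rule d(2))
    finally show ?thesis .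
  qed
  have sp: "scale_from T (\<lambda>_. l) D \<in> PR" by (rule scale_procs[OF D(1)]) simp
  have "\<alpha> T (scale_from T (\<lambda>_. l) D) w \<le> \<alpha> T E w"
    by (rule A3[OF _ E sp]) (use le in \<open>auto simp: scale_from_def\<close>)
  moreover have "\<alpha> T (scale_from T (\<lambda>_. l) D) = \<alpha> T D"
    by (rule A4[OF _ D(1)]) (use l0 in auto)
  ultimately show ?thesis using D(2) by simp
qed

lemma botT:
  assumes E: "E \<in> PR" and d: "0 < \<delta>" "\<And>v. E T v \<le> - \<delta>"
  shows "\<alpha> T E w = 0"
proof -
  obtain D0 where D0: "D0 \<in> PR" "\<alpha> T D0 w = 0" using nzT[of T w] by blast
  have neg: "D0 T w < 0"
  proof (rule ccontr)
    assume "\<not> D0 T w < 0"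
    hence d0: "0 \<le> D0 T w" by simp
    define F where "F = (\<lambda>s v. if s = T \<and> v \<notin> cell T w then 0 else D0 s v)"
    have F: "F \<in> PR"
    proof (rule procsI)
      fix s assume s: "s \<le> T"
      show "meas cell s (F s)"
      proof (cases "s = T")
        case True
        have m1: "meas cell T (D0 T)" using procsD[OF D0(1)] by simp
        show ?thesis unfolding meas_def F_def
        proof (intro allI impI)
          fix u u' assume u: "u' \<in> cell s u"
          have "(u' \<in> cell T w) = (u \<in> cell T w)"
            using measD[OF meas_indicator_cell[of R T w]] u True by blast
          moreover have "D0 T u' = D0 T u" using measD[OF m1] u True by blast
          ultimately show "(if s = T \<and> u' \<notin> cell T w then 0 else D0 s u') =
            (if s = T \<and> u \<notin> cell T w then 0 else D0 s u)" using True by simp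
        qed
      next
        case False
        then show ?thesis using procsD[OF D0(1) s] unfolding F_def meas_def by simp
      qed
    next
      fix s v assume "T < s" then show "F s v = 0" using procsD2[OF D0(1)] unfolding F_def by simp
    qed
    have FT: "0 \<le> F T v" for v
    proof (cases "v \<in> cell T w")
      case True
      have "D0 T v = D0 T w" using measD[OF procsD[OF D0(1)] True] by simp
      then show ?thesis using d0 True unfolding F_def by simp
    next
      case False then show ?thesis unfolding F_def by simp
    qed
    have inf: "\<alpha> T (padd F (ind_at T (\<lambda>_. c))) w = \<infinity>" if c: "0 < c" for c
    proof (rule topT[OF pc_procs[OF _ F] c])
      fix v show "c \<le> padd F (ind_at T (\<lambda>_. c)) T v"
        using FT[of v] by (simp add: padd_def ind_at_def)
    qed simp
    have "((\<lambda>c::real. \<alpha> T (padd F (ind_at T (\<lambda>_. c))) w) \<longlongrightarrow> \<infinity>) (at_right 0)"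
      by (rule tendsto_eventually) (use eventually_at_right_less[of "0::real"] inf in \<open>auto elim: eventually_mono\<close>)
    moreover have "((\<lambda>c::real. \<alpha> T (padd F (ind_at T (\<lambda>_. c))) w) \<longlongrightarrow> \<alpha> T F w) (at_right 0)"
      by (rule rcT[OF _ F]) simp
    ultimately have "\<alpha> T F w = \<infinity>" using tendsto_unique[OF trivial_limit_at_right_real] by blast
    moreover have "\<alpha> T F w = \<alpha> T D0 w"
      by (rule A2[OF _ F D0(1)]) (auto simp: F_def)
    ultimately show False using D0(2) by simp
  qed
  define l where "l = \<delta> / (- D0 T w)"
  have l0: "0 < l" using d neg by (simp add: l_def divide_pos_neg)
  have ld: "l * D0 T w = - \<delta>" using neg by (simp add: l_def)
  define G where "G = (\<lambda>s v. if s = T then (if v \<in> cell T w then l * D0 T v else E T v) else E s v)"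
  have G: "G \<in> PR"
  proof (rule procsI)
    fix s assume s: "s \<le> T"
    show "meas cell s (G s)"
    proof (cases "s = T")
      case True
      have m1: "meas cell T (D0 T)" using procsD[OF D0(1)] by simp
      have m2: "meas cell T (E T)" using procsD[OF E] by simp
      show ?thesis unfolding meas_def G_def
      proof (intro allI impI)
        fix u u' assume u: "u' \<in> cell s u"
        have "(u' \<in> cell T w) = (u \<in> cell T w)"
          using measD[OF meas_indicator_cell[of R T w]] u True by blast
        moreover have "D0 T u' = D0 T u" using measD[OF m1] u True by blast
        moreover have "E T u' = E T u" using measD[OF m2] u True by blast
        ultimately show "(if s = T then (if u' \<in> cell T w then l * D0 T u' else E T u') else E s u') =
          (if s = T then (if u \<in> cell T w then l * D0 T u else E T u) else E s u)" using True by simp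
      qed
    next
      case False
      then show ?thesis using procsD[OF E s] unfolding G_def meas_def by simp
    qed
  next
    fix s v assume "T < s" then show "G s v = 0" using procsD2[OF E] unfolding G_def by simp
  qed
  have sp: "scale_from T (\<lambda>_. l) D0 \<in> PR" by (rule scale_procs[OF D0(1)]) simp
  have "\<alpha> T G w = \<alpha> T (scale_from T (\<lambda>_. l) D0) w"
    by (rule A2[OF _ G sp]) (auto simp: G_def scale_from_def)
  also have "\<dots> = \<alpha> T D0 w"
    using A4[OF _ D0(1), where l="\<lambda>_. l"] l0 by simp
  finally have aG: "\<alpha> T G w = 0" using D0(2) by simp
  have "\<alpha> T E w \<le> \<alpha> T G w"
  proof (rule A3[OF _ G E])
    fix s v assume s: "T \<le> s" "s \<le> T"
    show "E s v \<le> G s v"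
    proof (cases "v \<in> cell T w")
      case True
      have "D0 T v = D0 T w" using measD[OF procsD[OF D0(1)] True] by simp
      then show ?thesis using s True ld d(2)[of v] unfolding G_def by simp
    next
      case False then show ?thesis unfolding G_def by simp
    qed
  qed simp
  then show ?thesis using aG A0[OF _ E, of T w] by simp
qed


lemma padd_swap3: "padd (padd D (ind_at s a)) (ind_at t b) = padd (padd D (ind_at t b)) (ind_at s a)"
  by (auto simp: padd_def fun_eq_iff)

lemma cash_move: "t < T \<Longrightarrow> D \<in> PR \<Longrightarrow>
   \<alpha> t (padd (padd D (ind_at (t+1) (\<lambda>_. c1))) (ind_at t (\<lambda>_. c0))) = \<alpha> t (padd D (ind_at t (\<lambda>_. c0 + c1)))"
proof -
  assume a: "t < T" "D \<in> PR"
  have B: "padd D (ind_at t (\<lambda>_. c0)) \<in> PR" using pc_procs a by simp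
  have "\<alpha> t (padd (padd D (ind_at t (\<lambda>_. c0))) (ind_at t (\<lambda>_. c1))) =
        \<alpha> t (padd (padd D (ind_at t (\<lambda>_. c0))) (ind_at (t+1) (\<lambda>_. c1)))"
    by (rule A6[OF _ B]) (use a in auto)
  then show ?thesis by (simp add: padd_ind_const padd_swap3)
qed

lemma topbot_aux: "T - t = k \<Longrightarrow> t \<le> T \<Longrightarrow> D \<in> PR \<Longrightarrow>
  (\<exists>c. \<forall>w. \<alpha> t (padd D (ind_at t (\<lambda>_. c))) w = \<infinity>) \<and> (\<exists>c. \<forall>w. \<alpha> t (padd D (ind_at t (\<lambda>_. c))) w = 0)"
proof (induction k arbitrary: t D)
  case 0
  then have tT: "t = T" by simp
  define M where "M = (\<Sum>v\<in>UNIV. \<bar>D T v\<bar>)"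
  have M: "\<bar>D T v\<bar> \<le> M" for v unfolding M_def by (rule abs_le_sumabs)
  have "\<alpha> T (padd D (ind_at T (\<lambda>_. M + 1))) w = \<infinity>" for w
  proof (rule topT[OF pc_procs[OF _ 0(3)], where \<delta>=1])
    fix v show "1 \<le> padd D (ind_at T (\<lambda>_. M + 1)) T v" using M[of v] by (simp add: padd_def ind_at_def)
  qed (use tT in auto)
  moreover have "\<alpha> T (padd D (ind_at T (\<lambda>_. - M - 1))) w = 0" for w
  proof (rule botT[OF pc_procs[OF _ 0(3)], where \<delta>=1])
    fix v show "padd D (ind_at T (\<lambda>_. - M - 1)) T v \<le> -1" using M[of v] by (simp add: padd_def ind_at_def)
  qed (use tT in auto)
  ultimately show ?case using tT by blast
next
  case (Suc k)
  then have tT: "t < T" and k: "T - (t+1) = k" by auto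
  note IH = Suc.IH[OF k _]
  have Z: "(\<lambda>_ _. 0) \<in> PR" by (rule zero_procs)
  define c0 where "c0 = (\<Sum>v\<in>UNIV. \<bar>D t v\<bar>)"
  have c0: "\<bar>D t v\<bar> \<le> c0" for v unfolding c0_def by (rule abs_le_sumabs)
  have top: "\<exists>c. \<forall>w. \<alpha> t (padd D (ind_at t (\<lambda>_. c))) w = \<infinity>"
  proof -
    obtain c1 where c1: "\<And>w. \<alpha> (t+1) (padd D (ind_at (t+1) (\<lambda>_. c1))) w = \<infinity>"
      using IH[OF _ Suc.prems(3)] tT by auto
    obtain c2 where c2: "\<And>w. \<alpha> (t+1) (padd (\<lambda>_ _. 0) (ind_at (t+1) (\<lambda>_. c2))) w = 0"
      using IH[OF _ Z] tT by auto
    define E where "E = padd (padd D (ind_at (t+1) (\<lambda>_. c1))) (ind_at t (\<lambda>_. c0))"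
    have E: "E \<in> PR" unfolding E_def using pc_procs Suc.prems(3) tT by simp
    have D': "padd (\<lambda>_ _. 0) (ind_at (t+1) (\<lambda>_. c2)) \<in> PR" using pc_procs Z tT by simp
    have aE: "\<alpha> (t+1) E v = \<infinity>" for v
    proof -
      have "\<alpha> (t+1) E v = \<alpha> (t+1) (padd D (ind_at (t+1) (\<lambda>_. c1))) v"
        by (rule A2[OF _ E pc_procs[OF _ Suc.prems(3)]]) (use tT in \<open>auto simp: E_def padd_def ind_at_def\<close>)
      then show ?thesis using c1 by simp
    qed
    have "ereal M \<le> \<alpha> t E w" for M w
    proof -
      have "ereal ((\<lambda>_. max M 0) w) \<le> \<alpha> t E w \<and> \<alpha> t (padd (\<lambda>_ _. 0) (ind_at (t+1) (\<lambda>_. c2))) w \<le> ereal ((\<lambda>_. max M 0) w)"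
      proof (rule A7[OF tT E D'])
        fix v show "0 \<le> E t v" using c0[of v] by (simp add: E_def padd_def ind_at_def)
      next
        fix v show "padd (\<lambda>_ _. 0) (ind_at (t+1) (\<lambda>_. c2)) t v \<le> 0" by (simp add: padd_def ind_at_def)
      qed (use aE c2 in \<open>auto simp: max_def\<close>)
      then show ?thesis by (meson ereal_less_eq(3) max.cobounded1 order_trans)
    qed
    then have "\<alpha> t E w = \<infinity>" for w by (intro ereal_top) auto
    then have "\<alpha> t (padd D (ind_at t (\<lambda>_. c0 + c1))) w = \<infinity>" for w
      using cash_move[OF tT Suc.prems(3), of c1 c0] unfolding E_def by simp
    then show ?thesis by blast
  qed
  have bot: "\<exists>c. \<forall>w. \<alpha> t (padd D (ind_at t (\<lambda>_. c))) w = 0"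
  proof -
    obtain c1 where c1: "\<And>w. \<alpha> (t+1) (padd D (ind_at (t+1) (\<lambda>_. c1))) w = 0"
      using IH[OF _ Suc.prems(3)] tT by auto
    define E where "E = padd (padd D (ind_at (t+1) (\<lambda>_. c1))) (ind_at t (\<lambda>_. - c0))"
    have E: "E \<in> PR" unfolding E_def using pc_procs Suc.prems(3) tT by simp
    have aE: "\<alpha> (t+1) E v = 0" for v
    proof -
      have "\<alpha> (t+1) E v = \<alpha> (t+1) (padd D (ind_at (t+1) (\<lambda>_. c1))) v"
        by (rule A2[OF _ E pc_procs[OF _ Suc.prems(3)]]) (use tT in \<open>auto simp: E_def padd_def ind_at_def\<close>)
      then show ?thesis using c1 by simp
    qed
    have "ereal ((\<lambda>_. 0) w) \<le> \<alpha> t (\<lambda>_ _. 0) w \<and> \<alpha> t E w \<le> ereal ((\<lambda>_. 0) w)" for w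
    proof (rule A7[OF tT Z E])
      fix v show "E t v \<le> 0" using c0[of v] by (simp add: E_def padd_def ind_at_def)
    next
      fix v show "ereal 0 \<le> \<alpha> (t+1) (\<lambda>_ _. 0) v" using A0[OF _ Z, of "t+1"] tT by (simp add: zero_ereal_def[symmetric])
    qed (use aE in auto)
    then have "\<alpha> t E w \<le> 0" for w by (simp add: zero_ereal_def)
    then have "\<alpha> t E w = 0" for w using A0[OF _ E, of t w] tT by (intro order_antisym) auto
    then have "\<alpha> t (padd D (ind_at t (\<lambda>_. - c0 + c1))) w = 0" for w
      using cash_move[OF tT Suc.prems(3), of c1 "- c0"] unfolding E_def by simp
    then show ?thesis by blast
  qed
  show ?case using top bot by blast
qed

lemma topbot: "t \<le> T \<Longrightarrow> D \<in> PR \<Longrightarrow>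
  (\<exists>c. \<forall>w. \<alpha> t (padd D (ind_at t (\<lambda>_. c))) w = \<infinity>) \<and> (\<exists>c. \<forall>w. \<alpha> t (padd D (ind_at t (\<lambda>_. c))) w = 0)"
  using topbot_aux by blast


section \<open>Risk measures\<close>

definition "Sx x t D w = {c. ereal x \<le> \<alpha> t (padd D (ind_at t (\<lambda>_. c))) w}"
definition "rf x t D w = real_of_ereal (rho \<alpha> x t D w)"

lemma rho_S: "rho \<alpha> x t D w = Inf (ereal ` Sx x t D w)"
  unfolding rho_def Sx_def by (simp add: image_def) (metis)

lemma S_up: "t \<le> T \<Longrightarrow> D \<in> PR \<Longrightarrow> c \<in> Sx x t D w \<Longrightarrow> c \<le> c' \<Longrightarrow> c' \<in> Sx x t D w"
proof -
  assume a: "t \<le> T" "D \<in> PR" "c \<in> Sx x t D w" "c \<le> c'"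
  have "\<alpha> t (padd D (ind_at t (\<lambda>_. c))) w \<le> \<alpha> t (padd D (ind_at t (\<lambda>_. c'))) w"
    by (rule A3[OF a(1) pc_procs pc_procs]) (use a in \<open>auto simp: padd_def ind_at_def\<close>)
  then show ?thesis using a(3) unfolding Sx_def by auto
qed

lemma rho_char:
  assumes "\<And>c. c > r \<Longrightarrow> c \<in> Sx x t D w" "\<And>c. c < r \<Longrightarrow> c \<notin> Sx x t D w"
  shows "rho \<alpha> x t D w = ereal r"
proof (rule antisym)
  show "ereal r \<le> rho \<alpha> x t D w" unfolding rho_S
  proof (rule Inf_greatest)
    fix y assume "y \<in> ereal ` Sx x t D w"
    then obtain c where "c \<in> Sx x t D w" "y = ereal c" by blast
    then show "ereal r \<le> y" using assms(2)[of c] by force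
  qed
  show "rho \<alpha> x t D w \<le> ereal r" unfolding rho_S Inf_le_iff
  proof (intro allI impI)
    fix y assume "ereal r < y"
    then obtain z where z: "ereal r < ereal z" "ereal z < y" using ereal_dense2 by blast
    then have "z \<in> Sx x t D w" using assms(1) by simp
    then show "\<exists>a\<in>ereal ` Sx x t D w. a < y" using z by blast
  qed
qed

lemma rho_fin:
  assumes x: "0 < x" and t: "t \<le> T" and D: "D \<in> PR"
  shows "\<exists>r. rho \<alpha> x t D w = ereal r \<and> (\<forall>c>r. c \<in> Sx x t D w) \<and> (\<forall>c<r. c \<notin> Sx x t D w)"
proof -
  obtain c1 where c1: "\<And>w. \<alpha> t (padd D (ind_at t (\<lambda>_. c1))) w = \<infinity>" using topbot[OF t D] by blast
  obtain c2 where c2: "\<And>w. \<alpha> t (padd D (ind_at t (\<lambda>_. c2))) w = 0" using topbot[OF t D] by blast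
  let ?S = "Sx x t D w"
  have ne: "c1 \<in> ?S" using c1 unfolding Sx_def by simp
  have nc2: "c2 \<notin> ?S" using c2 x unfolding Sx_def by simp
  have lb: "c2 < c" if "c \<in> ?S" for c
  proof (rule ccontr)
    assume "\<not> c2 < c" then have "c \<le> c2" by simp
    then have "c2 \<in> ?S" using S_up[OF t D that] by blast
    then show False using nc2 by simp
  qed
  have bdd: "bdd_below ?S" unfolding bdd_below_def using lb by (meson less_imp_le)
  define r where "r = Inf ?S"
  have A: "c \<in> ?S" if "c > r" for c
  proof -
    have "Inf ?S < c" using that r_def by simp
    then obtain s where "s \<in> ?S" "s < c" using cInf_less_iff[of ?S c] ne bdd by blast
    then show ?thesis using S_up[OF t D] by (meson less_imp_le)
  qed
  have B: "c \<notin> ?S" if "c < r" for c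
    using cInf_lower[OF _ bdd, of c] that r_def by fastforce
  show ?thesis using rho_char[of r x t D w] A B by blast
qed

lemma rho_rf: "0 < x \<Longrightarrow> t \<le> T \<Longrightarrow> D \<in> PR \<Longrightarrow> rho \<alpha> x t D w = ereal (rf x t D w)"
proof -
  assume a: "0 < x" "t \<le> T" "D \<in> PR"
  obtain r where "rho \<alpha> x t D w = ereal r" using rho_fin[OF a] by blast
  then show ?thesis unfolding rf_def by simp
qed

lemma rf_thr:
  assumes "0 < x" "t \<le> T" "D \<in> PR"
  shows "c > rf x t D w \<Longrightarrow> c \<in> Sx x t D w" and "c < rf x t D w \<Longrightarrow> c \<notin> Sx x t D w"
proof -
  obtain r where r: "rho \<alpha> x t D w = ereal r" "\<forall>c>r. c \<in> Sx x t D w" "\<forall>c<r. c \<notin> Sx x t D w"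
    using rho_fin[OF assms] by blast
  have "rf x t D w = r" using r(1) unfolding rf_def by simp
  then show "c > rf x t D w \<Longrightarrow> c \<in> Sx x t D w" and "c < rf x t D w \<Longrightarrow> c \<notin> Sx x t D w"
    using r by auto
qed

lemma rf_char:
  assumes "\<And>c. c > r \<Longrightarrow> c \<in> Sx x t D w" "\<And>c. c < r \<Longrightarrow> c \<notin> Sx x t D w"
  shows "rf x t D w = r"
  using rho_char[OF assms] unfolding rf_def by simp

lemma S_local:
  assumes t: "t \<le> T" and D: "D \<in> PR" and D': "D' \<in> PR"
    and eq: "\<And>s v. t \<le> s \<Longrightarrow> s \<le> T \<Longrightarrow> v \<in> cell t w \<Longrightarrow> D s v = D' s v"
  shows "Sx x t D w = Sx x t D' w"
proof -
  have "\<alpha> t (padd D (ind_at t (\<lambda>_. c))) w = \<alpha> t (padd D' (ind_at t (\<lambda>_. c))) w" for c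
    by (rule A2[OF t pc_procs[OF t D] pc_procs[OF t D']]) (use eq in \<open>auto simp: padd_def\<close>)
  then show ?thesis unfolding Sx_def by simp
qed

lemma rf_local:
  assumes t: "t \<le> T" and D: "D \<in> PR" and D': "D' \<in> PR"
    and eq: "\<And>s v. t \<le> s \<Longrightarrow> s \<le> T \<Longrightarrow> v \<in> cell t w \<Longrightarrow> D s v = D' s v"
  shows "rf x t D w = rf x t D' w"
  unfolding rf_def rho_S using S_local[OF assms] by simp

lemma rf_meas:
  assumes t: "t \<le> T" and D: "D \<in> PR" and v: "v \<in> cell t w"
  shows "rf x t D v = rf x t D w"
proof -
  have "Sx x t D v = Sx x t D w"
    unfolding Sx_def using A1[OF t pc_procs[OF t D] v] by simp
  then show ?thesis unfolding rf_def rho_S by simp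
qed

lemma rf_meas': "t \<le> T \<Longrightarrow> D \<in> PR \<Longrightarrow> meas cell t (rf x t D)"
  unfolding meas_def using rf_meas by blast

lemma rf_cash:
  assumes x: "0 < x" and t: "t \<le> s" "s \<le> T" and D: "D \<in> PR" and m: "meas cell t m"
  shows "rf x t (padd D (ind_at s m)) w = rf x t D w - m w"
proof -
  have tT: "t \<le> T" using t by simp
  have ms: "meas cell s m" using meas_mono[OF m t(1)] .
  have D2: "padd D (ind_at s m) \<in> PR" using padd_procs[OF D ind_at_procs[OF t(2) ms]] .
  have key: "c \<in> Sx x t (padd D (ind_at s m)) w \<longleftrightarrow> c + m w \<in> Sx x t D w" for c
  proof -
    have B: "padd D (ind_at t (\<lambda>_. c)) \<in> PR" using pc_procs[OF tT D] .
    have "\<alpha> t (padd (padd D (ind_at s m)) (ind_at t (\<lambda>_. c))) w =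
          \<alpha> t (padd (padd D (ind_at t (\<lambda>_. c))) (ind_at s m)) w" by (simp add: padd_swap3)
    also have "\<dots> = \<alpha> t (padd (padd D (ind_at t (\<lambda>_. c))) (ind_at t m)) w"
      using A6[OF tT B m t] by simp
    also have "\<dots> = \<alpha> t (padd D (ind_at t (\<lambda>_. c + m w))) w"
    proof (rule A2[OF tT padd_procs[OF B ind_at_procs[OF tT m]] pc_procs[OF tT D]])
      fix r v assume "v \<in> cell t w"
      then have "m v = m w" using measD[OF m] by simp
      then show "padd (padd D (ind_at t (\<lambda>_. c))) (ind_at t m) r v = padd D (ind_at t (\<lambda>_. c + m w)) r v"
        by (simp add: padd_def ind_at_def)
    qed
    finally show ?thesis unfolding Sx_def by simp
  qed
  show ?thesis
  proof (rule rf_char)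
    fix c assume "c > rf x t D w - m w"
    then have "c + m w > rf x t D w" by simp
    then show "c \<in> Sx x t (padd D (ind_at s m)) w" using key rf_thr(1)[OF x tT D] by blast
  next
    fix c assume "c < rf x t D w - m w"
    then have "c + m w < rf x t D w" by simp
    then show "c \<notin> Sx x t (padd D (ind_at s m)) w" using key rf_thr(2)[OF x tT D] by blast
  qed
qed

lemma rf_mono:
  assumes x: "0 < x" and t: "t \<le> T" and D: "D \<in> PR" and D': "D' \<in> PR"
    and le: "\<And>s v. t \<le> s \<Longrightarrow> s \<le> T \<Longrightarrow> D' s v \<le> D s v"
  shows "rf x t D w \<le> rf x t D' w"
proof (rule ccontr)
  assume "\<not> rf x t D w \<le> rf x t D' w"
  then have lt: "rf x t D' w < rf x t D w" by simp
  define c where "c = (rf x t D' w + rf x t D w) / 2"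
  have c1: "rf x t D' w < c" "c < rf x t D w" using lt by (auto simp: c_def)
  have "c \<in> Sx x t D' w" using rf_thr(1)[OF x t D' c1(1)] .
  moreover have "\<alpha> t (padd D' (ind_at t (\<lambda>_. c))) w \<le> \<alpha> t (padd D (ind_at t (\<lambda>_. c))) w"
    by (rule A3[OF t pc_procs[OF t D] pc_procs[OF t D']]) (use le in \<open>auto simp: padd_def ind_at_def\<close>)
  ultimately have "c \<in> Sx x t D w" unfolding Sx_def by auto
  then show False using rf_thr(2)[OF x t D c1(2)] by simp
qed

lemma rf_scale:
  assumes x: "0 < x" and t: "t \<le> T" and D: "D \<in> PR" and l: "meas cell t l" "\<And>v. 0 < l v"
  shows "rf x t (scale_from t l D) w = l w * rf x t D w"
proof -
  have lw: "0 < l w" using l(2) by simp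
  have key: "c \<in> Sx x t (scale_from t l D) w \<longleftrightarrow> c / l w \<in> Sx x t D w" for c
  proof -
    have P1: "padd D (ind_at t (\<lambda>_. c / l w)) \<in> PR" using pc_procs[OF t D] .
    have "\<alpha> t (padd (scale_from t l D) (ind_at t (\<lambda>_. c))) w =
          \<alpha> t (scale_from t l (padd D (ind_at t (\<lambda>_. c / l w)))) w"
    proof (rule A2[OF t pc_procs[OF t scale_procs[OF D l(1)]] scale_procs[OF P1 l(1)]])
      fix s v assume s: "t \<le> s" and v: "v \<in> cell t w"
      have "l v = l w" using measD[OF l(1) v] .
      then show "padd (scale_from t l D) (ind_at t (\<lambda>_. c)) s v = scale_from t l (padd D (ind_at t (\<lambda>_. c / l w))) s v"
        using s lw by (simp add: padd_def ind_at_def scale_from_def field_simps)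
    qed
    also have "\<dots> = \<alpha> t (padd D (ind_at t (\<lambda>_. c / l w))) w"
      using A4[OF t P1 l] by simp
    finally show ?thesis unfolding Sx_def by simp
  qed
  show ?thesis
  proof (rule rf_char)
    fix c assume "c > l w * rf x t D w"
    then have "c / l w > rf x t D w" using lw by (simp add: field_simps)
    then show "c \<in> Sx x t (scale_from t l D) w" using key rf_thr(1)[OF x t D] by blast
  next
    fix c assume "c < l w * rf x t D w"
    then have "c / l w < rf x t D w" using lw by (simp add: field_simps)
    then show "c \<notin> Sx x t (scale_from t l D) w" using key rf_thr(2)[OF x t D] by blast
  qed
qed

lemma rf_zero:
  assumes x: "0 < x" and t: "t \<le> T"
  shows "rf x t (\<lambda>_ _. 0) w = 0"
proof -
  have "scale_from t (\<lambda>_. 2) (\<lambda>_ _. 0) = ((\<lambda>_ _. 0) :: 'w proc)" by (auto simp: scale_from_def fun_eq_iff)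
  moreover have "rf x t (scale_from t (\<lambda>_. 2) (\<lambda>_ _. 0)) w = (\<lambda>_. 2) w * rf x t (\<lambda>_ _. 0) w"
    by (rule rf_scale[OF x t zero_procs]) auto
  ultimately have "rf x t (\<lambda>_ _. 0) w = 2 * rf x t (\<lambda>_ _. 0) w" by simp
  then show ?thesis by simp
qed

lemma rf_dual:
  assumes x: "0 < x" and t: "t \<le> T" and D: "D \<in> PR"
  shows "ereal x \<le> \<alpha> t D w \<longleftrightarrow> rf x t D w \<le> 0"
proof
  assume "ereal x \<le> \<alpha> t D w"
  then have "0 \<in> Sx x t D w" unfolding Sx_def by simp
  then show "rf x t D w \<le> 0" using rf_thr(2)[OF x t D, where c=0] by (meson not_less)
next
  assume r: "rf x t D w \<le> 0"
  have ev: "eventually (\<lambda>c. ereal x \<le> \<alpha> t (padd D (ind_at t (\<lambda>_. c))) w) (at_right (0::real))"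
  proof (rule eventually_mono[OF eventually_at_right_less[of "0::real"]])
    fix c :: real assume "0 < c"
    then have "c \<in> Sx x t D w" using rf_thr(1)[OF x t D, where c=c] r by simp
    then show "ereal x \<le> \<alpha> t (padd D (ind_at t (\<lambda>_. c))) w" unfolding Sx_def by simp
  qed
  show "ereal x \<le> \<alpha> t D w"
    by (rule tendsto_lowerbound[OF rcT[OF t D] ev]) simp
qed


lemma meas_neg: "meas cell t f \<Longrightarrow> meas cell t (\<lambda>v. - f v)"
  unfolding meas_def by simp

lemma rf_T:
  assumes x: "0 < x" and D: "D \<in> PR"
  shows "rf x T D w = - D T w"
proof -
  have DT: "meas cell T (D T)" using procsD[OF D] by simp
  have "rf x T D w = rf x T (padd (\<lambda>_ _. 0) (ind_at T (D T))) w"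
    by (rule rf_local[OF _ D padd_procs[OF zero_procs ind_at_procs[OF _ DT]]]) (auto simp: padd_def ind_at_def)
  also have "\<dots> = rf x T (\<lambda>_ _. 0) w - D T w"
    by (rule rf_cash[OF x _ _ zero_procs DT]) auto
  finally show ?thesis using rf_zero[OF x, of T w] by simp
qed

lemma stc_step:
  assumes x: "0 < x" and stc: "strongly_tc cell T (rho \<alpha> x)" and s: "s < T" and D: "D \<in> PR"
  shows "rf x s D w = rf x s (ind_at (s+1) (\<lambda>v. - rf x (s+1) D v)) w - D s w"
proof -
  define m where "m = (\<lambda>v. - rf x (s+1) D v)"
  have m: "meas cell (s+1) m" unfolding m_def using meas_neg[OF rf_meas'[OF _ D]] s by simp
  have I: "ind_at (s+1) m \<in> PR" using ind_at_procs[OF _ m] s by simp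
  have Ds: "meas cell s (D s)" using procsD[OF D] s by simp
  define E where "E = padd (ind_at (s+1) m) (ind_at s (D s))"
  have E: "E \<in> PR" unfolding E_def using padd_procs[OF I ind_at_procs[OF _ Ds]] s by simp
  have eq1: "\<forall>w. D s w = E s w" by (simp add: E_def padd_def ind_at_def)
  have eq2: "rho \<alpha> x (s+1) D = rho \<alpha> x (s+1) E"
  proof
    fix v
    have "rf x (s+1) E v = rf x (s+1) (padd (\<lambda>_ _. 0) (ind_at (s+1) m)) v"
      by (rule rf_local[OF _ E padd_procs[OF zero_procs I]]) (use s in \<open>auto simp: E_def padd_def ind_at_def\<close>)
    also have "\<dots> = rf x (s+1) (\<lambda>_ _. 0) v - m v"
      by (rule rf_cash[OF x _ _ zero_procs m]) (use s in auto)
    also have "\<dots> = rf x (s+1) D v" using rf_zero[OF x, of "s+1" v] s by (simp add: m_def)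
    finally show "rho \<alpha> x (s+1) D v = rho \<alpha> x (s+1) E v"
      using rho_rf[OF x _ D, of "s+1" v] rho_rf[OF x _ E, of "s+1" v] s by simp
  qed
  have "rho \<alpha> x s D = rho \<alpha> x s E"
    using stc s D E eq1 eq2 unfolding strongly_tc_def by blast
  then have "rf x s D w = rf x s E w" unfolding rf_def by simp
  also have "\<dots> = rf x s (ind_at (s+1) m) w - D s w"
    unfolding E_def by (rule rf_cash[OF x _ _ I Ds]) (use s in auto)
  finally show ?thesis by (simp add: m_def)
qed

section \<open>Portfolios\<close>

abbreviation "PF t V \<equiv> portfolios (ret_cell R) R T t V"

lemma pf_meas: "h \<in> PF t V \<Longrightarrow> t \<le> s \<Longrightarrow> s < T \<Longrightarrow> meas cell s (\<lambda>w. h s w i)"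
  unfolding portfolios_def by blast
lemma pf_nonneg: "h \<in> PF t V \<Longrightarrow> t \<le> s \<Longrightarrow> s < T \<Longrightarrow> 0 \<le> h s w i"
  unfolding portfolios_def by blast
lemma pf_sum: "h \<in> PF t V \<Longrightarrow> t \<le> s \<Longrightarrow> s < T \<Longrightarrow> (\<Sum>i\<in>UNIV. h s w i) = wealth R t V h s w"
  unfolding portfolios_def by blast

lemma wealth_t: "wealth R t V h t = V"
  by (simp add: wealth_def fun_eq_iff)

lemma wealth_succ: "t \<le> s \<Longrightarrow> wealth R t V h (s+1) w = (\<Sum>i\<in>UNIV. R (s+1) w i * h s w i)"
  by (simp add: wealth_def)

lemma sum_pos_aux:
  fixes f g :: "'d \<Rightarrow> real"
  assumes "\<And>i. 0 \<le> f i" "0 < (\<Sum>i\<in>UNIV. f i)" "\<And>i. 0 < g i"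
  shows "0 < (\<Sum>i\<in>UNIV. g i * f i)"
proof -
  obtain j where j: "0 < f j"
  proof (rule ccontr)
    assume "\<not> thesis"
    then have "\<And>i. f i \<le> 0" using that by (meson not_le)
    then have "(\<Sum>i\<in>UNIV. f i) \<le> 0" by (simp add: sum_nonpos)
    then show False using assms(2) by simp
  qed
  show ?thesis
    by (rule sum_pos2[of UNIV j]) (use j assms in \<open>auto intro: mult_nonneg_nonneg less_imp_le\<close>)
qed

lemma wealth_pos:
  assumes h: "h \<in> PF t V" and V: "\<And>u. 0 < V u" and s: "t \<le> s" "s \<le> T"
  shows "0 < wealth R t V h s w"
  using s
proof (induction s rule: dec_induct)
  case base then show ?case by (simp add: wealth_t V)
next
  case (step n)
  have nT: "n < T" using step(2) s(2) by simp
  have "0 < (\<Sum>i\<in>UNIV. R (n+1) w i * h n w i)"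
  proof (rule sum_pos_aux)
    show "0 \<le> h n w i" for i using pf_nonneg[OF h step(1) nT] .
    show "0 < (\<Sum>i\<in>UNIV. h n w i)" using pf_sum[OF h step(1) nT] step(3) nT by simp
    show "0 < R (n+1) w i" for i using Rpos nT by simp
  qed
  then show ?case using wealth_succ[OF step(1)] by simp
qed

lemma wealth_meas:
  assumes h: "h \<in> PF t V" and V: "meas cell t V" and s: "t \<le> s" "s \<le> T"
  shows "meas cell s (wealth R t V h s)"
proof (cases "s = t")
  case True then show ?thesis using V by (simp add: wealth_t)
next
  case False
  then obtain n where n: "s = n + 1" "t \<le> n" "n < T" using s by (cases s) auto
  show ?thesis unfolding meas_def
  proof (intro allI impI)
    fix u u' assume u: "u' \<in> cell s u"
    have "R (n+1) u' = R (n+1) u" using u n by (simp add: ret_cell_def)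
    moreover have "h n u' i = h n u i" for i
      using measD[OF pf_meas[OF h n(2,3)] cell_mono[OF _ u]] n by simp
    ultimately show "wealth R t V h s u' = wealth R t V h s u"
      using n wealth_succ[OF n(2), of V h u'] wealth_succ[OF n(2), of V h u] by simp
  qed
qed

lemma divs_procs:
  assumes h: "h \<in> PF t V" and V: "meas cell t V"
  shows "divs R T t V h \<in> PR"
proof (rule procsI)
  fix r assume r: "r \<le> T"
  show "meas cell r (divs R T t V h r)"
  proof (cases "t < r")
    case True
    have m1: "meas cell r (wealth R t V h r)" using wealth_meas[OF h V] True r by simp
    have m2: "meas cell r (wealth R t V h (r-1))" using meas_mono[OF wealth_meas[OF h V, of "r-1"]] True r by simp
    show ?thesis using m1 m2 True r unfolding meas_def divs_def by simp
  next
    case False then show ?thesis unfolding divs_def meas_def by simp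
  qed
next
  fix r v assume "T < r" then show "divs R T t V h r v = 0" unfolding divs_def by simp
qed


definition "OSH x q \<longleftrightarrow> (\<forall>s k w. s < T \<longrightarrow> (\<forall>i. meas cell s (\<lambda>v. k v i)) \<longrightarrow>
    rf x s (ind_at (s+1) (\<lambda>v. \<Sum>i\<in>UNIV. R (s+1) v i * k v i)) w = q (k w))"

lemma stepG:
  assumes x: "0 < x" and os: "OSH x q" and h: "h \<in> PF t V" and V: "meas cell t V" "\<And>u. 0 < V u"
    and s: "t \<le> s" "s < T"
  shows "rf x s (ind_at (s+1) (divs R T t V h (s+1))) w =
         wealth R t V h s w * (q (\<lambda>i. h s w i / wealth R t V h s w) + 1)"
proof -
  let ?W = "wealth R t V h"
  have Ws: "meas cell s (?W s)" using wealth_meas[OF h V(1)] s by simp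
  have Wp: "0 < ?W s v" for v using wealth_pos[OF h V(2)] s by simp
  have Ws1: "meas cell (s+1) (?W (s+1))" using wealth_meas[OF h V(1)] s by simp
  define k where "k = (\<lambda>v i. h s v i / ?W s v)"
  have km: "meas cell s (\<lambda>v. k v i)" for i
    unfolding meas_def k_def using measD[OF Ws] measD[OF pf_meas[OF h s]] by simp
  define Z where "Z = (\<lambda>v. \<Sum>i\<in>UNIV. R (s+1) v i * k v i)"
  have Zm: "meas cell (s+1) Z" unfolding meas_def
  proof (intro allI impI)
    fix u u' assume u: "u' \<in> cell (s+1) u"
    have "R (s+1) u' = R (s+1) u" using u by (simp add: ret_cell_def)
    moreover have "k u' i = k u i" for i using measD[OF km cell_mono[OF _ u]] by simp
    ultimately show "Z u' = Z u" unfolding Z_def by simp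
  qed
  have hZ: "?W (s+1) v = ?W s v * Z v" for v
  proof -
    have "?W (s+1) v = (\<Sum>i\<in>UNIV. R (s+1) v i * h s v i)" using wealth_succ[OF s(1)] by simp
    also have "\<dots> = (\<Sum>i\<in>UNIV. ?W s v * (R (s+1) v i * k v i))"
      using Wp[of v] by (intro sum.cong) (auto simp: k_def)
    also have "\<dots> = ?W s v * Z v" unfolding Z_def by (simp add: sum_distrib_left)
    finally show ?thesis .
  qed
  have I1: "ind_at (s+1) (?W (s+1)) \<in> PR" using ind_at_procs[OF _ Ws1] s by simp
  have IZ: "ind_at (s+1) Z \<in> PR" using ind_at_procs[OF _ Zm] s by simp
  have e1: "ind_at (s+1) (divs R T t V h (s+1)) = padd (ind_at (s+1) (?W (s+1))) (ind_at (s+1) (\<lambda>v. - ?W s v))"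
    using s by (auto simp: fun_eq_iff divs_def padd_def ind_at_def)
  have "rf x s (ind_at (s+1) (divs R T t V h (s+1))) w = rf x s (ind_at (s+1) (?W (s+1))) w + ?W s w"
    unfolding e1 using rf_cash[OF x _ _ I1 meas_neg[OF Ws], of "s+1" w] s by simp
  moreover have e2: "ind_at (s+1) (?W (s+1)) = scale_from s (?W s) (ind_at (s+1) Z)"
    by (auto simp: fun_eq_iff scale_from_def ind_at_def hZ[simplified])
  moreover have "rf x s (scale_from s (?W s) (ind_at (s+1) Z)) w = ?W s w * rf x s (ind_at (s+1) Z) w"
    by (rule rf_scale[OF x _ IZ Ws Wp]) (use s in auto)
  moreover have "rf x s (ind_at (s+1) Z) w = q (k w)"
    using os km s unfolding OSH_def Z_def by blast
  ultimately show ?thesis by (simp add: k_def algebra_simps)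
qed

lemma lower_aux:
  assumes x: "0 < x" and stc: "strongly_tc cell T (rho \<alpha> x)" and os: "OSH x q"
    and h: "h \<in> PF t V" and V: "meas cell t V" "\<And>u. 0 < V u"
    and Q: "\<And>s w. t \<le> s \<Longrightarrow> s < T \<Longrightarrow> -1 \<le> q (\<lambda>i. h s w i / wealth R t V h s w)"
  shows "T - s = n \<Longrightarrow> t \<le> s \<Longrightarrow> s \<le> T \<Longrightarrow> - divs R T t V h s w \<le> rf x s (divs R T t V h) w"
proof (induction n arbitrary: s w)
  case 0
  then have "s = T" by simp
  then show ?case using rf_T[OF x divs_procs[OF h V(1)]] by simp
next
  case (Suc n)
  let ?D = "divs R T t V h"
  have D: "?D \<in> PR" using divs_procs[OF h V(1)] .
  have s: "s < T" "t \<le> s" using Suc by auto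
  have IH: "- ?D (s+1) v \<le> rf x (s+1) ?D v" for v using Suc.IH[of "s+1" v] Suc.prems s by simp
  have IH': "- rf x (s+1) ?D v \<le> ?D (s+1) v" for v using IH[of v] by linarith
  have m1: "meas cell (s+1) (\<lambda>v. - rf x (s+1) ?D v)" using meas_neg[OF rf_meas'[OF _ D]] s by simp
  have m2: "meas cell (s+1) (?D (s+1))" using procsD[OF D] s by simp
  have "rf x s (ind_at (s+1) (?D (s+1))) w \<le> rf x s (ind_at (s+1) (\<lambda>v. - rf x (s+1) ?D v)) w"
    by (rule rf_mono[OF x _ ind_at_procs[OF _ m2] ind_at_procs[OF _ m1]])
       (use s IH' in \<open>auto simp: ind_at_def\<close>)
  moreover have "rf x s (ind_at (s+1) (?D (s+1))) w = wealth R t V h s w * (q (\<lambda>i. h s w i / wealth R t V h s w) + 1)"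
    using stepG[OF x os h V s(2,1)] .
  moreover have "0 \<le> wealth R t V h s w * (q (\<lambda>i. h s w i / wealth R t V h s w) + 1)"
    using less_imp_le[OF wealth_pos[OF h V(2) s(2), of w]] Q[OF s(2,1), of w] s by (intro mult_nonneg_nonneg) auto
  moreover have "rf x s ?D w = rf x s (ind_at (s+1) (\<lambda>v. - rf x (s+1) ?D v)) w - ?D s w"
    using stc_step[OF x stc s(1) D] .
  ultimately show ?case by linarith
qed

lemma upper_aux:
  assumes x: "0 < x" and stc: "strongly_tc cell T (rho \<alpha> x)" and os: "OSH x q"
    and h: "h \<in> PF t V" and V: "meas cell t V" "\<And>u. 0 < V u"
    and Q: "\<And>s w. t \<le> s \<Longrightarrow> s < T \<Longrightarrow> q (\<lambda>i. h s w i / wealth R t V h s w) \<le> -1"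
  shows "T - s = n \<Longrightarrow> t \<le> s \<Longrightarrow> s \<le> T \<Longrightarrow> rf x s (divs R T t V h) w \<le> - divs R T t V h s w"
proof (induction n arbitrary: s w)
  case 0
  then have "s = T" by simp
  then show ?case using rf_T[OF x divs_procs[OF h V(1)]] by simp
next
  case (Suc n)
  let ?D = "divs R T t V h"
  have D: "?D \<in> PR" using divs_procs[OF h V(1)] .
  have s: "s < T" "t \<le> s" using Suc by auto
  have IH: "rf x (s+1) ?D v \<le> - ?D (s+1) v" for v using Suc.IH[of "s+1" v] Suc.prems s by simp
  have IH': "?D (s+1) v \<le> - rf x (s+1) ?D v" for v using IH[of v] by linarith
  have m1: "meas cell (s+1) (\<lambda>v. - rf x (s+1) ?D v)" using meas_neg[OF rf_meas'[OF _ D]] s by simp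
  have m2: "meas cell (s+1) (?D (s+1))" using procsD[OF D] s by simp
  have "rf x s (ind_at (s+1) (\<lambda>v. - rf x (s+1) ?D v)) w \<le> rf x s (ind_at (s+1) (?D (s+1))) w"
    by (rule rf_mono[OF x _ ind_at_procs[OF _ m1] ind_at_procs[OF _ m2]])
       (use s IH' in \<open>auto simp: ind_at_def\<close>)
  moreover have "rf x s (ind_at (s+1) (?D (s+1))) w = wealth R t V h s w * (q (\<lambda>i. h s w i / wealth R t V h s w) + 1)"
    using stepG[OF x os h V s(2,1)] .
  moreover have "wealth R t V h s w * (q (\<lambda>i. h s w i / wealth R t V h s w) + 1) \<le> 0"
    using less_imp_le[OF wealth_pos[OF h V(2) s(2), of w]] Q[OF s(2,1), of w] s by (intro mult_nonneg_nonpos) auto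
  moreover have "rf x s ?D w = rf x s (ind_at (s+1) (\<lambda>v. - rf x (s+1) ?D v)) w - ?D s w"
    using stc_step[OF x stc s(1) D] .
  ultimately show ?case by linarith
qed


definition "simplex (c::'d \<Rightarrow> real) \<longleftrightarrow> (\<forall>i. 0 \<le> c i) \<and> (\<Sum>i\<in>UNIV. c i) = 1"

definition "myo t V c = (\<lambda>s w i. V w * (\<Prod>r\<in>{t<..s}. \<Sum>j\<in>UNIV. R r w j * c j) * c i)"

lemma gAM_Suc: "t \<le> n \<Longrightarrow> {t<..Suc n} = insert (Suc n) {t<..n}"
  by auto

lemma myo_wealth: "wealth R t V (myo t V c) s w = V w * (\<Prod>r\<in>{t<..s}. \<Sum>j\<in>UNIV. R r w j * c j)"
proof (cases "s \<le> t")
  case True then show ?thesis by (simp add: wealth_def)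
next
  case False
  then obtain n where n: "s = Suc n" "t \<le> n" by (cases s) auto
  have "wealth R t V (myo t V c) s w = (\<Sum>i\<in>UNIV. R (Suc n) w i * (V w * (\<Prod>r\<in>{t<..n}. \<Sum>j\<in>UNIV. R r w j * c j) * c i))"
    using n by (simp add: wealth_def myo_def)
  also have "\<dots> = (\<Sum>i\<in>UNIV. (V w * (\<Prod>r\<in>{t<..n}. \<Sum>j\<in>UNIV. R r w j * c j)) * (R (Suc n) w i * c i))"
    by (rule sum.cong) (simp_all add: mult_ac)
  also have "\<dots> = V w * (\<Prod>r\<in>{t<..n}. \<Sum>j\<in>UNIV. R r w j * c j) * (\<Sum>j\<in>UNIV. R (Suc n) w j * c j)"
    by (rule sum_distrib_left[symmetric])
  also have "\<dots> = V w * (\<Prod>r\<in>{t<..s}. \<Sum>j\<in>UNIV. R r w j * c j)"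
    using n by (simp add: gAM_Suc)
  finally show ?thesis .
qed

lemma fac_pos: "simplex c \<Longrightarrow> 1 \<le> r \<Longrightarrow> r \<le> T \<Longrightarrow> 0 < (\<Sum>j\<in>UNIV. R r w j * c j)"
  by (rule sum_pos_aux) (use Rpos in \<open>auto simp: simplex_def\<close>)

lemma prod_fac_pos: "simplex c \<Longrightarrow> s \<le> T \<Longrightarrow> 0 < (\<Prod>r\<in>{t<..s}. \<Sum>j\<in>UNIV. R r w j * c j)"
  by (rule prod_pos) (auto intro: fac_pos)

lemma myo_pf:
  assumes c: "simplex c" and V: "meas cell t V" "\<And>u. 0 < V u"
  shows "myo t V c \<in> PF t V"
  unfolding portfolios_def
proof (intro CollectI allI impI conjI)
  fix s i w assume s: "t \<le> s \<and> s < T"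
  show "meas cell s (\<lambda>w. myo t V c s w i)" unfolding meas_def
  proof (intro allI impI)
    fix u u' assume u: "u' \<in> cell s u"
    have "V u' = V u" using measD[OF V(1) cell_mono[OF _ u]] s by simp
    moreover have "(\<Prod>r\<in>{t<..s}. \<Sum>j\<in>UNIV. R r u' j * c j) = (\<Prod>r\<in>{t<..s}. \<Sum>j\<in>UNIV. R r u j * c j)"
      using u by (intro prod.cong) (auto simp: ret_cell_def)
    ultimately show "myo t V c s u' i = myo t V c s u i" by (simp add: myo_def)
  qed
  show "0 \<le> myo t V c s w i"
    using V(2)[of w] prod_fac_pos[OF c, where s=s and t=t and w=w] c s unfolding myo_def simplex_def
    by (intro mult_nonneg_nonneg) auto
  have "(\<Sum>i\<in>UNIV. myo t V c s w i) = V w * (\<Prod>r\<in>{t<..s}. \<Sum>j\<in>UNIV. R r w j * c j) * (\<Sum>i\<in>UNIV. c i)"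
    unfolding myo_def by (rule sum_distrib_left[symmetric])
  also have "\<dots> = wealth R t V (myo t V c) s w"
    using c unfolding simplex_def by (simp add: myo_wealth)
  finally show "(\<Sum>i\<in>UNIV. myo t V c s w i) = wealth R t V (myo t V c) s w" .
qed

lemma myo_k:
  assumes c: "simplex c" and V: "\<And>u. 0 < V u" and s: "s < T"
  shows "(\<lambda>i. myo t V c s w i / wealth R t V (myo t V c) s w) = c"
proof -
  define P where "P = V w * (\<Prod>r\<in>{t<..s}. \<Sum>j\<in>UNIV. R r w j * c j)"
  have "0 < P" unfolding P_def
    using V[of w] prod_fac_pos[OF c, where s=s and t=t and w=w] s by (intro mult_pos_pos) auto
  then have nz: "P \<noteq> 0" by (rule not_sym[OF less_imp_neq])
  have W: "wealth R t V (myo t V c) s w = P" unfolding P_def by (rule myo_wealth)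
  have "myo t V c s w i / wealth R t V (myo t V c) s w = c i" for i
  proof -
    have "myo t V c s w i = P * c i" unfolding P_def myo_def by simp
    then show ?thesis unfolding W using nz by simp
  qed
  then show ?thesis by (simp add: fun_eq_iff)
qed

lemma k_simplex:
  assumes h: "h \<in> PF t V" and V: "\<And>u. 0 < V u" and s: "t \<le> s" "s < T"
  shows "simplex (\<lambda>i. h s w i / wealth R t V h s w)"
proof -
  have W: "0 < wealth R t V h s w" using wealth_pos[OF h V s(1)] s by simp
  show ?thesis unfolding simplex_def
    using W pf_nonneg[OF h s] pf_sum[OF h s, of w] by (simp add: sum_divide_distrib[symmetric])
qed

lemma main_equiv:
  assumes x: "0 < x" and stc: "strongly_tc cell T (rho \<alpha> x)" and os: "OSH x q"
    and t: "t < T" and V: "meas cell t V" "\<And>u. 0 < V u"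
  shows "(\<exists>h\<in>PF t V. ereal x \<le> \<alpha> t (divs R T t V h) w) \<longleftrightarrow> (\<exists>c. simplex c \<and> q c \<le> -1)"
proof
  assume "\<exists>h\<in>PF t V. ereal x \<le> \<alpha> t (divs R T t V h) w"
  then obtain h where h: "h \<in> PF t V" and a: "ereal x \<le> \<alpha> t (divs R T t V h) w" by blast
  let ?D = "divs R T t V h"
  have D: "?D \<in> PR" using divs_procs[OF h V(1)] .
  have r0: "rf x t ?D w \<le> 0" using rf_dual[OF x _ D] a t by simp
  show "\<exists>c. simplex c \<and> q c \<le> -1"
  proof (rule ccontr)
    assume nc: "\<not> (\<exists>c. simplex c \<and> q c \<le> -1)"
    have Q: "-1 \<le> q (\<lambda>i. h s w i / wealth R t V h s w)" if "t \<le> s" "s < T" for s w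
      using nc k_simplex[OF h V(2) that, of w] by force
    have low: "- ?D (t+1) v \<le> rf x (t+1) ?D v" for v
      by (rule lower_aux[OF x stc os h V Q, of "t+1" "T - (t+1)"]) (use t in auto)
    have m1: "meas cell (t+1) (\<lambda>v. - rf x (t+1) ?D v)" using meas_neg[OF rf_meas'[OF _ D]] t by simp
    have m2: "meas cell (t+1) (?D (t+1))" using procsD[OF D] t by simp
    have "rf x t (ind_at (t+1) (?D (t+1))) w \<le> rf x t (ind_at (t+1) (\<lambda>v. - rf x (t+1) ?D v)) w"
      by (rule rf_mono[OF x _ ind_at_procs[OF _ m2] ind_at_procs[OF _ m1]])
         (use t low in \<open>auto simp: ind_at_def add.commute neg_le_iff_le minus_le_iff\<close>)
    moreover have "rf x t (ind_at (t+1) (?D (t+1))) w = wealth R t V h t w * (q (\<lambda>i. h t w i / wealth R t V h t w) + 1)"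
      using stepG[OF x os h V _ t] by simp
    moreover have "0 < wealth R t V h t w * (q (\<lambda>i. h t w i / wealth R t V h t w) + 1)"
    proof -
      have "q (\<lambda>i. h t w i / wealth R t V h t w) > -1" using nc k_simplex[OF h V(2) _ t, of w] by force
      moreover have "0 < wealth R t V h t w" using wealth_pos[OF h V(2), of t] t by simp
      ultimately show ?thesis by simp
    qed
    moreover have "rf x t ?D w = rf x t (ind_at (t+1) (\<lambda>v. - rf x (t+1) ?D v)) w - ?D t w"
      using stc_step[OF x stc t D] .
    moreover have "?D t w = 0" by (simp add: divs_def)
    ultimately show False using r0 by linarith
  qed
next
  assume "\<exists>c. simplex c \<and> q c \<le> -1"
  then obtain c where c: "simplex c" "q c \<le> -1" by blast
  let ?h = "myo t V c"
  have h: "?h \<in> PF t V" using myo_pf[OF c(1) V] .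
  let ?D = "divs R T t V ?h"
  have D: "?D \<in> PR" using divs_procs[OF h V(1)] .
  have Q: "q (\<lambda>i. ?h s w i / wealth R t V ?h s w) \<le> -1" if "t \<le> s" "s < T" for s w
    using myo_k[OF c(1) V(2) that(2)] c(2) by simp
  have "rf x t ?D w \<le> - ?D t w"
    by (rule upper_aux[OF x stc os h V Q, of t "T - t"]) (use t in auto)
  moreover have "?D t w = 0" by (simp add: divs_def)
  ultimately have "rf x t ?D w \<le> 0" by simp
  then have "ereal x \<le> \<alpha> t ?D w" using rf_dual[OF x _ D] t by simp
  then show "\<exists>h\<in>PF t V. ereal x \<le> \<alpha> t (divs R T t V h) w" using h by blast
qed

end

section \<open>Probability\<close>

lemma cond_ID:
  assumes "cond_I P cell T \<rho>" "t < T" "s < T" "meas cell (t+1) Z" "meas cell (s+1) Z'"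
    "\<forall>v. prob P (cell t w0 \<inter> {w. Z w = v}) / prob P (cell t w0)
        = prob P (cell s w1 \<inter> {w. Z' w = v}) / prob P (cell s w1)"
    "w \<in> cell t w0" "w' \<in> cell s w1"
  shows "\<rho> t (ind_at (t+1) Z) w = \<rho> s (ind_at (s+1) Z') w'"
proof -
  have "\<forall>t<T. \<forall>s<T. \<forall>w0 w1. \<forall>Z Z'.
     meas cell (t+1) Z \<longrightarrow> meas cell (s+1) Z' \<longrightarrow>
     (\<forall>v. prob P (cell t w0 \<inter> {w. Z w = v}) / prob P (cell t w0)
        = prob P (cell s w1 \<inter> {w. Z' w = v}) / prob P (cell s w1)) \<longrightarrow>
     (\<forall>w\<in>cell t w0. \<forall>w'\<in>cell s w1. \<rho> t (ind_at (t+1) Z) w = \<rho> s (ind_at (s+1) Z') w')"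
    using assms(1) unfolding cond_I_def .
  then have "\<forall>w\<in>cell t w0. \<forall>w'\<in>cell s w1. \<rho> t (ind_at (t+1) Z) w = \<rho> s (ind_at (s+1) Z') w'"
    using assms(2-6) by simp
  then show ?thesis using assms(7,8) by simp
qed


lemma prob_group:
  fixes P :: "'w::finite \<Rightarrow> real" and g :: "'w \<Rightarrow> 'b"
  assumes F: "finite F" "g ` {u. g u \<in> B} \<subseteq> F" "F \<subseteq> B"
  shows "prob P {u. g u \<in> B} = (\<Sum>a\<in>F. prob P {u. g u = a})"
proof -
  have "sum P {u. g u \<in> B} = (\<Sum>a\<in>F. sum P {x. x \<in> {u. g u \<in> B} \<and> g x = a})"
    by (rule sum.group[symmetric]) (use F in auto)
  also have "\<dots> = (\<Sum>a\<in>F. sum P {u. g u = a})"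
  proof (rule sum.cong[OF refl])
    fix a assume "a \<in> F"
    then have "{x. x \<in> {u. g u \<in> B} \<and> g x = a} = {u. g u = a}" using F(3) by auto
    then show "sum P {x. x \<in> {u. g u \<in> B} \<and> g x = a} = sum P {u. g u = a}" by simp
  qed
  finally show ?thesis unfolding prob_def .
qed

lemma e1test:
  fixes R :: "nat \<Rightarrow> 'w \<Rightarrow> 'd \<Rightarrow> real"
  shows "{u. \<forall>r\<in>I. R r u \<in> B r} = {u. restrict (\<lambda>r. R r u) I \<in> PiE I (\<lambda>r. B r \<inter> range (R r))}"
  by (simp add: PiE_iff)

lemma e2test:
  fixes R :: "nat \<Rightarrow> 'w \<Rightarrow> 'd \<Rightarrow> real"
  assumes v: "v \<in> PiE I A"
  shows "{u. restrict (\<lambda>r. R r u) I = v} = {u. \<forall>r\<in>I. R r u = v r}"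
proof -
  have "restrict (\<lambda>r. R r u) I = v \<longleftrightarrow> (\<forall>r\<in>I. R r u = v r)" for u
  proof
    assume h: "restrict (\<lambda>r. R r u) I = v" show "\<forall>r\<in>I. R r u = v r"
    proof
      fix r assume "r \<in> I" then show "R r u = v r" using h by (metis restrict_apply')
    qed
  next
    assume a: "\<forall>r\<in>I. R r u = v r"
    show "restrict (\<lambda>r. R r u) I = v"
    proof
      fix r show "restrict (\<lambda>r. R r u) I r = v r"
        using a v by (cases "r \<in> I") (auto simp: PiE_iff extensional_def)
    qed
  qed
  then show ?thesis by blast
qed
lemma iid1: "iid P R T \<Longrightarrow> s \<in> {1..T} \<Longrightarrow> s' \<in> {1..T} \<Longrightarrow> prob P {w. R s w = v} = prob P {w. R s' w = v}"
  unfolding iid_def by blast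

lemma iid2: "iid P R T \<Longrightarrow> prob P {w. \<forall>s\<in>{1..T}. R s w = v s} = (\<Prod>s\<in>{1..T}. prob P {w. R s w = v s})"
  unfolding iid_def by blast

lemma prob_rect:
  fixes P :: "'w::finite \<Rightarrow> real" and R :: "nat \<Rightarrow> 'w \<Rightarrow> 'd \<Rightarrow> real"
  assumes iid: "iid P R T"
  shows "prob P {u. \<forall>r\<in>{1..T}. R r u \<in> B r} = (\<Prod>r\<in>{1..T}. prob P {u. R r u \<in> B r})"
proof -
  let ?I = "{1..T}"
  define A where "A = (\<lambda>r. B r \<inter> range (R r))"
  have fA: "finite (A r)" for r unfolding A_def by simp
  define f where "f = (\<lambda>u. restrict (\<lambda>r. R r u) ?I)"
  have fin: "finite (PiE ?I A)" using fA by (simp add: finite_PiE)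
  have e1: "{u. \<forall>r\<in>?I. R r u \<in> B r} = {u. f u \<in> PiE ?I A}"
    unfolding f_def A_def by (rule e1test)
  have "prob P {u. f u \<in> PiE ?I A} = (\<Sum>v\<in>PiE ?I A. prob P {u. f u = v})"
    by (rule prob_group[OF fin]) auto
  also have "\<dots> = (\<Sum>v\<in>PiE ?I A. \<Prod>r\<in>?I. prob P {u. R r u = v r})"
  proof (rule sum.cong)
    fix v assume v: "v \<in> PiE ?I A"
    have "{u. f u = v} = {u. \<forall>r\<in>?I. R r u = v r}"
      unfolding f_def by (rule e2test[OF v])
    then show "prob P {u. f u = v} = (\<Prod>r\<in>?I. prob P {u. R r u = v r})"
      using iid2[OF iid, of v] by simp
  qed simp
  also have "\<dots> = (\<Prod>r\<in>?I. \<Sum>a\<in>A r. prob P {u. R r u = a})"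
    by (rule prod_sum_PiE[symmetric]) (use fA in auto)
  also have "\<dots> = (\<Prod>r\<in>?I. prob P {u. R r u \<in> B r})"
  proof (rule prod.cong)
    fix r show "(\<Sum>a\<in>A r. prob P {u. R r u = a}) = prob P {u. R r u \<in> B r}"
      by (rule prob_group[symmetric]) (use fA in \<open>auto simp: A_def\<close>)
  qed simp
  finally show ?thesis using e1 by simp
qed

lemma marginal_eq:
  fixes P :: "'w::finite \<Rightarrow> real" and R :: "nat \<Rightarrow> 'w \<Rightarrow> 'd \<Rightarrow> real"
  assumes iid: "iid P R T" and r: "r \<in> {1..T}"
  shows "prob P {u. R r u \<in> B} = prob P {u. R 1 u \<in> B}"
proof -
  define F where "F = B \<inter> (range (R r) \<union> range (R 1))"
  have fF: "finite F" unfolding F_def by simp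
  have "prob P {u. R r u \<in> B} = (\<Sum>a\<in>F. prob P {u. R r u = a})"
    by (rule prob_group[OF fF]) (auto simp: F_def)
  also have "\<dots> = (\<Sum>a\<in>F. prob P {u. R 1 u = a})"
    by (intro sum.cong refl iid1[OF iid r]) (use r in simp)
  also have "\<dots> = prob P {u. R 1 u \<in> B}"
    by (rule prob_group[OF fF, symmetric]) (auto simp: F_def)
  finally show ?thesis .
qed

lemma prob_cell_split:
  fixes P :: "'w::finite \<Rightarrow> real" and R :: "nat \<Rightarrow> 'w \<Rightarrow> 'd \<Rightarrow> real"
  assumes iid: "iid P R T" and P1: "(\<Sum>w\<in>UNIV. P w) = 1" and s: "s < T"
  shows "prob P (ret_cell R s w \<inter> {u. R (s+1) u \<in> B}) = prob P (ret_cell R s w) * prob P {u. R 1 u \<in> B}"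
proof -
  let ?I = "{1..T}"
  define Bf where "Bf = (\<lambda>B' r. if r \<le> s then {R r w} else if r = s+1 then B' else UNIV)"
  have e: "ret_cell R s w \<inter> {u. R (s+1) u \<in> B'} = {u. \<forall>r\<in>?I. R r u \<in> Bf B' r}" for B'
  proof -
    have "u \<in> ret_cell R s w \<inter> {u. R (s+1) u \<in> B'} \<longleftrightarrow> (\<forall>r\<in>?I. R r u \<in> Bf B' r)" for u
    proof
      assume "u \<in> ret_cell R s w \<inter> {u. R (s+1) u \<in> B'}"
      then show "\<forall>r\<in>?I. R r u \<in> Bf B' r" unfolding Bf_def ret_cell_def by auto
    next
      assume a: "\<forall>r\<in>?I. R r u \<in> Bf B' r"
      have "R r u = R r w" if "r \<in> {1..s}" for r using a[rule_format, of r] that s unfolding Bf_def by auto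
      moreover have "R (s+1) u \<in> B'" using a[rule_format, of "s+1"] s unfolding Bf_def by auto
      ultimately show "u \<in> ret_cell R s w \<inter> {u. R (s+1) u \<in> B'}" unfolding ret_cell_def by auto
    qed
    then show ?thesis by blast
  qed
  define g where "g = (\<lambda>B' r. prob P {u. R r u \<in> Bf B' r})"
  have pU: "prob P {u. R r u \<in> UNIV} = 1" for r using P1 unfolding prob_def by simp
  have sI: "s+1 \<in> ?I" using s by simp
  have split: "(\<Prod>r\<in>?I. g B' r) = g B' (s+1) * (\<Prod>r\<in>?I-{s+1}. g UNIV r)" for B'
  proof -
    have "(\<Prod>r\<in>?I. g B' r) = g B' (s+1) * (\<Prod>r\<in>?I-{s+1}. g B' r)"
      by (rule prod.remove[OF _ sI]) simp
    moreover have "(\<Prod>r\<in>?I-{s+1}. g B' r) = (\<Prod>r\<in>?I-{s+1}. g UNIV r)"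
      by (rule prod.cong) (auto simp: g_def Bf_def)
    ultimately show ?thesis by simp
  qed
  have gU: "g UNIV (s+1) = 1" unfolding g_def Bf_def using pU by simp
  have gB: "g B (s+1) = prob P {u. R 1 u \<in> B}"
    unfolding g_def Bf_def using marginal_eq[OF iid sI] by simp
  have "prob P (ret_cell R s w \<inter> {u. R (s+1) u \<in> B}) = (\<Prod>r\<in>?I. g B r)"
    unfolding e g_def by (rule prob_rect[OF iid])
  moreover have "prob P (ret_cell R s w) = (\<Prod>r\<in>?I. g UNIV r)"
    using e[of UNIV] prob_rect[OF iid, of "Bf UNIV"] unfolding g_def by simp
  ultimately show ?thesis using split[of B] split[of UNIV] gU gB by simp
qed

context mkt
begin


lemma OS_from_I:
  assumes x: "0 < x" and cI: "cond_I P cell T (rho \<alpha> x)" and iid: "iid P R T"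
    and Ppos: "\<forall>w. 0 < P w" and P1: "(\<Sum>w\<in>UNIV. P w) = 1"
  shows "OSH x (\<lambda>c. rf x 0 (ind_at 1 (\<lambda>v. \<Sum>i\<in>UNIV. R 1 v i * c i)) undefined)"
  unfolding OSH_def
proof (intro allI impI)
  fix s :: nat and k :: "'w \<Rightarrow> 'd \<Rightarrow> real" and w :: 'w
  assume s: "s < T" and km: "\<forall>i. meas cell s (\<lambda>v. k v i)"
  define Z where "Z = (\<lambda>v. \<Sum>i\<in>UNIV. R (s+1) v i * k v i)"
  define Z' where "Z' = (\<lambda>v. \<Sum>i\<in>UNIV. R 1 v i * k w i)"
  have Zm: "meas cell (s+1) Z" unfolding meas_def
  proof (intro allI impI)
    fix u u' assume u: "u' \<in> cell (s+1) u"
    have "R (s+1) u' = R (s+1) u" using u by (simp add: ret_cell_def)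
    moreover have "k u' i = k u i" for i using measD[OF km[rule_format] cell_mono[OF _ u]] by simp
    ultimately show "Z u' = Z u" unfolding Z_def by simp
  qed
  have Z'm: "meas cell (0+1) Z'" unfolding meas_def
  proof (intro allI impI)
    fix u u' assume u: "u' \<in> cell (0+1) u"
    have "R 1 u' = R 1 u" using u by (simp add: ret_cell_def)
    then show "Z' u' = Z' u" unfolding Z'_def by simp
  qed
  have law: "\<forall>v. prob P (cell s w \<inter> {u. Z u = v}) / prob P (cell s w) =
        prob P (cell 0 undefined \<inter> {u. Z' u = v}) / prob P (cell 0 undefined)"
  proof
    fix v
    define Bv where "Bv = {a. (\<Sum>i\<in>UNIV. a i * k w i) = v}"
    have Zc: "Z u = (\<Sum>i\<in>UNIV. R (s+1) u i * k w i)" if "u \<in> cell s w" for u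
    proof -
      have "k u i = k w i" for i using measD[OF km[rule_format] that] .
      then show ?thesis unfolding Z_def by simp
    qed
    have e1: "cell s w \<inter> {u. Z u = v} = cell s w \<inter> {u. R (s+1) u \<in> Bv}"
    proof (rule set_eqI)
      fix u show "u \<in> cell s w \<inter> {u. Z u = v} \<longleftrightarrow> u \<in> cell s w \<inter> {u. R (s+1) u \<in> Bv}"
        using Zc[of u] unfolding Bv_def by auto
    qed
    have e2: "cell 0 undefined \<inter> {u. Z' u = v} = {u. R 1 u \<in> Bv}"
      unfolding Z'_def Bv_def by simp
    have pU: "prob P (cell 0 undefined) = 1" using P1 unfolding prob_def by simp
    have pc: "0 < prob P (cell s w)" unfolding prob_def
      by (rule sum_pos2[where i=w]) (use Ppos in \<open>auto intro: less_imp_le\<close>)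
    have "prob P (cell s w \<inter> {u. Z u = v}) = prob P (cell s w) * prob P {u. R 1 u \<in> Bv}"
      unfolding e1 by (rule prob_cell_split[OF iid P1 s])
    then show "prob P (cell s w \<inter> {u. Z u = v}) / prob P (cell s w) =
        prob P (cell 0 undefined \<inter> {u. Z' u = v}) / prob P (cell 0 undefined)"
      unfolding e2 pU using pc by simp
  qed
  have T0: "0 < T" using s by simp
  have "rho \<alpha> x s (ind_at (s+1) Z) w = rho \<alpha> x 0 (ind_at (0+1) Z') undefined"
    by (rule cond_ID[OF cI s T0 Zm Z'm law]) simp_all
  then have "rf x s (ind_at (s+1) Z) w = rf x 0 (ind_at 1 Z') undefined" unfolding rf_def by simp
  then show "rf x s (ind_at (s+1) (\<lambda>v. \<Sum>i\<in>UNIV. R (s+1) v i * k v i)) w =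
     rf x 0 (ind_at 1 (\<lambda>v. \<Sum>i\<in>UNIV. R 1 v i * k w i)) undefined"
    unfolding Z_def Z'_def .
qed

lemma uniform_simplex: "simplex (\<lambda>i::'d. 1 / real (card (UNIV::'d set)))"
  unfolding simplex_def using finite_UNIV_card_ge_0[where 'a='d] by simp

lemma PF_ne: "meas cell t V \<Longrightarrow> (\<And>u. 0 < V u) \<Longrightarrow> PF t V \<noteq> {}"
proof -
  assume a: "meas cell t V" "\<And>u. 0 < V u"
  have "myo t V (\<lambda>i::'d. 1 / real (card (UNIV::'d set))) \<in> PF t V"
    by (rule myo_pf[OF uniform_simplex a])
  then show ?thesis using ex_in_conv by fast
qed

end

lemma SUP_le_levels:
  fixes f :: "'a \<Rightarrow> ereal" and g :: "'b \<Rightarrow> ereal"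
  assumes B: "b0 \<in> B" "\<And>b. b \<in> B \<Longrightarrow> 0 \<le> g b"
    and lev: "\<And>x. 0 < x \<Longrightarrow> (\<exists>a\<in>A. ereal x \<le> f a) \<Longrightarrow> (\<exists>b\<in>B. ereal x \<le> g b)"
  shows "(SUP a\<in>A. f a) \<le> (SUP b\<in>B. g b)"
proof (rule ccontr)
  assume "\<not> ?thesis"
  then have lt: "(SUP b\<in>B. g b) < (SUP a\<in>A. f a)" by simp
  then obtain z where z: "(SUP b\<in>B. g b) < ereal z" "ereal z < (SUP a\<in>A. f a)" using ereal_dense2 by blast
  have g0: "0 \<le> g b0" using B by simp
  have "g b0 \<le> (SUP b\<in>B. g b)" by (rule SUP_upper[OF B(1)])
  then have "0 \<le> (SUP b\<in>B. g b)" using g0 by (rule order_trans[rotated])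
  then have "0 < ereal z" using z(1) by (rule le_less_trans)
  then have z0: "0 < z" by simp
  obtain a where a: "a \<in> A" "ereal z < f a" using z(2) by (auto simp: less_SUP_iff)
  then have "\<exists>a\<in>A. ereal z \<le> f a" by (intro bexI[of _ a]) (simp_all add: less_imp_le)
  then obtain b where b: "b \<in> B" "ereal z \<le> g b" using lev[OF z0] by blast
  have "g b \<le> (SUP b\<in>B. g b)" using b(1) by (rule SUP_upper)
  then show False using b(2) z(1) by simp
qed

theorem theorem3p2:
  fixes P :: "'w::finite \<Rightarrow> real"
    and R :: "nat \<Rightarrow> 'w \<Rightarrow> 'd::finite \<Rightarrow> real"
    and T :: nat
    and \<alpha> :: "nat \<Rightarrow> 'w proc \<Rightarrow> 'w \<Rightarrow> ereal"
  assumes "\<forall>w. 0 < P w" and "(\<Sum>w\<in>UNIV. P w) = 1"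
    and "\<forall>s\<in>{1..T}. \<forall>w i. 0 < R s w i"
    and "iid P R T"
    and "dcai (ret_cell R) T \<alpha>"
    and "normalized (ret_cell R) T \<alpha>"
    and "right_cont (ret_cell R) T \<alpha>"
    and "\<forall>x>0. strongly_tc (ret_cell R) T (rho \<alpha> x)"
    and "\<forall>x>0. cond_I P (ret_cell R) T (rho \<alpha> x)"
  shows "\<forall>t<T. \<forall>w w'. \<forall>V. meas (ret_cell R) t V \<longrightarrow> (\<forall>u. 0 < V u) \<longrightarrow>
           max_acc R T \<alpha> t V w = max_acc R T \<alpha> 0 (\<lambda>_. 1) w'"
proof (intro allI impI)
  interpret M: mkt R T \<alpha> using assms(3,5,6,7) by unfold_locales
  fix t :: nat and w w' :: 'w and V :: "'w \<Rightarrow> real"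
  assume t: "t < T" and V: "meas (ret_cell R) t V" and Vp: "\<forall>u. 0 < V u"
  have Vp': "\<And>u. 0 < V u" using Vp by simp
  have V1: "meas (ret_cell R) 0 (\<lambda>_::'w. 1::real)" by simp
  have V1p: "\<And>u::'w. 0 < (\<lambda>_. 1::real) u" by simp
  have T0: "0 < T" using t by simp
  define q where "q = (\<lambda>x c. M.rf x 0 (ind_at 1 (\<lambda>v. \<Sum>i\<in>UNIV. R 1 v i * c i)) undefined)"
  have os: "M.OSH x (q x)" if "0 < x" for x
    unfolding q_def using assms(9) that by (intro M.OS_from_I[OF that _ assms(4) assms(1) assms(2)]) simp
  have stc: "strongly_tc (ret_cell R) T (rho \<alpha> x)" if "0 < x" for x using assms(8) that by simp
  have lev: "(\<exists>h\<in>M.PF t V. ereal x \<le> \<alpha> t (divs R T t V h) w) \<longleftrightarrow>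
             (\<exists>h\<in>M.PF 0 (\<lambda>_. 1). ereal x \<le> \<alpha> 0 (divs R T 0 (\<lambda>_. 1) h) w')" if x: "0 < x" for x
    using M.main_equiv[OF x stc[OF x] os[OF x] t V Vp', of w]
          M.main_equiv[OF x stc[OF x] os[OF x] T0 V1 V1p, of w'] by simp
  obtain h1 where h1: "h1 \<in> M.PF t V" using M.PF_ne[OF V Vp'] by blast
  obtain h2 where h2: "h2 \<in> M.PF 0 (\<lambda>_. 1)" using M.PF_ne[OF V1 V1p] by blast
  have nn1: "0 \<le> \<alpha> t (divs R T t V h) w" if "h \<in> M.PF t V" for h
    using M.A0[OF _ M.divs_procs[OF that V]] t by simp
  have nn2: "0 \<le> \<alpha> 0 (divs R T 0 (\<lambda>_. 1) h) w'" if "h \<in> M.PF 0 (\<lambda>_. 1)" for h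
    using M.A0[OF _ M.divs_procs[OF that V1]] by simp
  show "max_acc R T \<alpha> t V w = max_acc R T \<alpha> 0 (\<lambda>_. 1) w'"
    unfolding max_acc_def
  proof (rule antisym)
    have l1: "\<And>x::real. 0 < x \<Longrightarrow> (\<exists>h\<in>M.PF t V. ereal x \<le> \<alpha> t (divs R T t V h) w) \<Longrightarrow>
             (\<exists>h\<in>M.PF 0 (\<lambda>_. 1). ereal x \<le> \<alpha> 0 (divs R T 0 (\<lambda>_. 1) h) w')" using lev by blast
    have l2: "\<And>x::real. 0 < x \<Longrightarrow> (\<exists>h\<in>M.PF 0 (\<lambda>_. 1). ereal x \<le> \<alpha> 0 (divs R T 0 (\<lambda>_. 1) h) w') \<Longrightarrow>
             (\<exists>h\<in>M.PF t V. ereal x \<le> \<alpha> t (divs R T t V h) w)" using lev by blast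
    show "(SUP h\<in>M.PF t V. \<alpha> t (divs R T t V h) w) \<le> (SUP h\<in>M.PF 0 (\<lambda>_. 1). \<alpha> 0 (divs R T 0 (\<lambda>_. 1) h) w')"
      by (rule SUP_le_levels[OF h2 nn2 l1])
    show "(SUP h\<in>M.PF 0 (\<lambda>_. 1). \<alpha> 0 (divs R T 0 (\<lambda>_. 1) h) w') \<le> (SUP h\<in>M.PF t V. \<alpha> t (divs R T t V h) w)"
      by (rule SUP_le_levels[OF h1 nn1 l2])
  qed
qed

end
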